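(* Let $1<p<\infty$, $1/p+1/q=1$, let $f\in L_p(\mathbb{R})\cap L_1(\mathbb{R})$, and let $(f_i)_{i=1}^\infty$ be a sequence of uniformly discrete translates of $f$, i.e. $f_i=f_{(\lambda_i)}$ where $\{\lambda_i:i\in\mathbb{N}\}$ consists of distinct points and is uniformly discrete. Then $(f_i)_{i=1}^\infty$ is not a fundamental bounded minimal system for $L_p(\mathbb{R})$. Furthermore, there is no sequence $(g_i)_{i=1}^\infty\subseteq L_q(\mathbb{R})$ such that $(f_i,g_i)_{i=1}^\infty$ is a (Schauder) frame for $L_p(\mathbb{R})$.
   Context: $f_{(\lambda)}(x)=f(x-\lambda)$. $\Lambda\subseteq\mathbb{R}$ is uniformly discrete if $\inf\{|\lambda-\lambda'|:\lambda\neq\lambda'\in\Lambda\}>0$. A sequence $(x_i)$ in a Banach space $X$ is a minimal system if there are $x_i^*\in X^*$ with $x_i^*(x_j)=\delta_{ij}$; it is a bounded minimal system if moreover the $x_i^*$ can be chosen with $\sup_i\|x_i\|\|x_i^*\|<\infty$; it is fundamental if its closed linear span is $X$. A (Schauder) frame for a Banach space $X$ is a sequence $(x_i,x_i^* )\subseteq X\times X^*$ such that $x=\sum_{i=1}^\infty x_i^*(x)x_i$ (norm convergence) for every $x\in X$; here $g\in L_q(\mathbb{R})$ acts on $L_p(\mathbb{R})$ via $\langle h,g\rangle=\int hg$. *)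

theory Defs
  imports "HOL-Analysis.Analysis"
begin

text \<open>Real-valued L_p(R) with respect to Lebesgue (Borel) measure; functions are
  representatives of equivalence classes.\<close>

definition in_Lp :: "real \<Rightarrow> (real \<Rightarrow> real) \<Rightarrow> bool" where
  "in_Lp p h \<longleftrightarrow> h \<in> borel_measurable lborel \<and> integrable lborel (\<lambda>x. \<bar>h x\<bar> powr p)"

definition lp_norm :: "real \<Rightarrow> (real \<Rightarrow> real) \<Rightarrow> real" where
  "lp_norm p h = (\<integral>x. \<bar>h x\<bar> powr p \<partial>lborel) powr (1 / p)"

definition translate :: "(real \<Rightarrow> real) \<Rightarrow> real \<Rightarrow> (real \<Rightarrow> real)" where
  "translate f a = (\<lambda>x. f (x - a))"

definition uniformly_discrete_seq :: "(nat \<Rightarrow> real) \<Rightarrow> bool" where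
  "uniformly_discrete_seq lam \<longleftrightarrow>
     (\<exists>\<delta>>0. \<forall>i j. i \<noteq> j \<longrightarrow> \<delta> \<le> \<bar>lam i - lam j\<bar>)"

definition Lp_dual :: "real \<Rightarrow> ((real \<Rightarrow> real) \<Rightarrow> real) \<Rightarrow> bool" where
  "Lp_dual p \<phi> \<longleftrightarrow>
     (\<forall>h k a b. in_Lp p h \<longrightarrow> in_Lp p k \<longrightarrow>
        \<phi> (\<lambda>x. a * h x + b * k x) = a * \<phi> h + b * \<phi> k) \<and>
     (\<exists>C. \<forall>h. in_Lp p h \<longrightarrow> \<bar>\<phi> h\<bar> \<le> C * lp_norm p h)"

definition dual_norm :: "real \<Rightarrow> ((real \<Rightarrow> real) \<Rightarrow> real) \<Rightarrow> real" where
  "dual_norm p \<phi> = Inf {C. 0 \<le> C \<and> (\<forall>h. in_Lp p h \<longrightarrow> \<bar>\<phi> h\<bar> \<le> C * lp_norm p h)}"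

definition bounded_minimal_Lp :: "real \<Rightarrow> (nat \<Rightarrow> real \<Rightarrow> real) \<Rightarrow> bool" where
  "bounded_minimal_Lp p x \<longleftrightarrow>
     (\<exists>xs :: nat \<Rightarrow> (real \<Rightarrow> real) \<Rightarrow> real.
        (\<forall>i. Lp_dual p (xs i)) \<and>
        (\<forall>i j. xs i (x j) = (if i = j then 1 else 0)) \<and>
        (\<exists>M. \<forall>i. lp_norm p (x i) * dual_norm p (xs i) \<le> M))"

definition fundamental_Lp :: "real \<Rightarrow> (nat \<Rightarrow> real \<Rightarrow> real) \<Rightarrow> bool" where
  "fundamental_Lp p x \<longleftrightarrow>
     (\<forall>h. in_Lp p h \<longrightarrow> (\<forall>\<epsilon>>0. \<exists>n c. lp_norm p (\<lambda>t. h t - (\<Sum>i<n. c i * x i t)) < \<epsilon>))"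

definition Lp_frame :: "real \<Rightarrow> (nat \<Rightarrow> real \<Rightarrow> real) \<Rightarrow> (nat \<Rightarrow> real \<Rightarrow> real) \<Rightarrow> bool" where
  "Lp_frame p x g \<longleftrightarrow>
     (\<forall>h. in_Lp p h \<longrightarrow>
        ((\<lambda>n. lp_norm p (\<lambda>t. h t - (\<Sum>i<n. (\<integral>s. h s * g i s \<partial>lborel) * x i t)))
           \<longlonglongrightarrow> 0))"

end

theory Submission
  imports Defs
begin


lemma integral_shift:
  fixes F :: "real \<Rightarrow> real"
  shows "(\<integral>x. F (x - a) \<partial>lborel) = (\<integral>x. F x \<partial>lborel)"
  using lborel_integral_real_affine[of 1 F "-a"] by simp

lemma integrable_shift_iff:
  fixes F :: "real \<Rightarrow> real"
  shows "integrable lborel (\<lambda>x. F (x - a)) \<longleftrightarrow> integrable lborel F"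
  using lborel_integrable_real_affine_iff[of 1 F "-a"] by simp

lemma measurable_shift:
  fixes F :: "real \<Rightarrow> real"
  assumes "F \<in> borel_measurable lborel"
  shows "(\<lambda>x. F (x - a)) \<in> borel_measurable lborel"
  using assms by measurable

lemma powr_abs_add_le:
  fixes u v p :: real assumes "0 < p"
  shows "\<bar>u + v\<bar> powr p \<le> 2 powr p * (\<bar>u\<bar> powr p + \<bar>v\<bar> powr p)"
proof -
  have "\<bar>u + v\<bar> \<le> 2 * max \<bar>u\<bar> \<bar>v\<bar>" by auto
  hence "\<bar>u + v\<bar> powr p \<le> (2 * max \<bar>u\<bar> \<bar>v\<bar>) powr p"
    using assms by (intro powr_mono2) auto
  also have "\<dots> = 2 powr p * max \<bar>u\<bar> \<bar>v\<bar> powr p" by (simp add: powr_mult)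
  also have "max \<bar>u\<bar> \<bar>v\<bar> powr p \<le> \<bar>u\<bar> powr p + \<bar>v\<bar> powr p"
    by (cases "\<bar>u\<bar> \<le> \<bar>v\<bar>") (auto simp: max_def)
  finally show ?thesis by (simp add: mult_left_mono)
qed

lemma in_Lp_lin:
  assumes p: "0 < p" and h: "in_Lp p h" and k: "in_Lp p k"
  shows "in_Lp p (\<lambda>x. a * h x + b * k x)"
  unfolding in_Lp_def
proof
  have [measurable]: "h \<in> borel_measurable lborel" "k \<in> borel_measurable lborel"
    using h k by (auto simp: in_Lp_def)
  show "(\<lambda>x. a * h x + b * k x) \<in> borel_measurable lborel" by measurable
  have ih: "integrable lborel (\<lambda>x. \<bar>h x\<bar> powr p)" "integrable lborel (\<lambda>x. \<bar>k x\<bar> powr p)"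
    using h k by (auto simp: in_Lp_def)
  show "integrable lborel (\<lambda>x. \<bar>a * h x + b * k x\<bar> powr p)"
  proof (rule Bochner_Integration.integrable_bound)
    show "integrable lborel (\<lambda>x. 2 powr p * (\<bar>a\<bar> powr p * \<bar>h x\<bar> powr p + \<bar>b\<bar> powr p * \<bar>k x\<bar> powr p))"
      using ih by auto
    show "(\<lambda>x. \<bar>a * h x + b * k x\<bar> powr p) \<in> borel_measurable lborel" by measurable
    show "AE x in lborel. norm (\<bar>a * h x + b * k x\<bar> powr p)
        \<le> norm (2 powr p * (\<bar>a\<bar> powr p * \<bar>h x\<bar> powr p + \<bar>b\<bar> powr p * \<bar>k x\<bar> powr p))"
      using powr_abs_add_le[OF p, of "a * h _" "b * k _"]
      by (auto simp: abs_mult powr_mult)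
  qed
qed


lemma in_Lp_translate:
  assumes "in_Lp p h" shows "in_Lp p (translate h a)"
  using assms unfolding in_Lp_def translate_def
  using integrable_shift_iff[of "\<lambda>x. \<bar>h x\<bar> powr p" a] measurable_shift[of h a] by auto

lemma int_pow_translate:
  "(\<integral>x. \<bar>translate h a x\<bar> powr p \<partial>lborel) = (\<integral>x. \<bar>h x\<bar> powr p \<partial>lborel)"
  unfolding translate_def using integral_shift[of "\<lambda>x. \<bar>h x\<bar> powr p" a] by simp

lemma lp_norm_translate: "lp_norm p (translate h a) = lp_norm p h"
  unfolding lp_norm_def using int_pow_translate by simp

lemma in_Lp_zero: "0 < p \<Longrightarrow> in_Lp p (\<lambda>x. 0)"
  unfolding in_Lp_def by simp

lemma in_Lp_sum:
  fixes n :: nat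
  assumes p: "0 < p" and F: "\<And>i. i < n \<Longrightarrow> in_Lp p (F i)"
  shows "in_Lp p (\<lambda>x. \<Sum>i<n. c i * F i x)"
  using F
proof (induction n)
  case 0 then show ?case using in_Lp_zero[OF p] by simp
next
  case (Suc n)
  have "in_Lp p (\<lambda>x. 1 * (\<Sum>i<n. c i * F i x) + c n * F n x)"
    using Suc by (intro in_Lp_lin[OF p]) auto
  then show ?case by simp
qed

lemma Lp_dual_zero:
  assumes "Lp_dual p \<phi>" "0 < p" shows "\<phi> (\<lambda>x. 0) = 0"
proof -
  have "\<phi> (\<lambda>x. 0 * (0::real) + 0 * 0) = 0 * \<phi> (\<lambda>x. 0) + 0 * \<phi> (\<lambda>x. 0)"
    using assms in_Lp_zero[of p] unfolding Lp_dual_def by blast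
  then show ?thesis by simp
qed

lemma Lp_dual_lin:
  assumes "Lp_dual p \<phi>" "in_Lp p h" "in_Lp p k"
  shows "\<phi> (\<lambda>x. a * h x + b * k x) = a * \<phi> h + b * \<phi> k"
  using assms unfolding Lp_dual_def by blast

lemma Lp_dual_sum:
  fixes n :: nat
  assumes phi: "Lp_dual p \<phi>" and p: "0 < p" and F: "\<And>i. i < n \<Longrightarrow> in_Lp p (F i)"
  shows "\<phi> (\<lambda>x. \<Sum>i<n. c i * F i x) = (\<Sum>i<n. c i * \<phi> (F i))"
  using F
proof (induction n)
  case 0 then show ?case using Lp_dual_zero[OF phi p] by simp
next
  case (Suc n)
  have "\<phi> (\<lambda>x. 1 * (\<Sum>i<n. c i * F i x) + c n * F n x) = 1 * \<phi> (\<lambda>x. \<Sum>i<n. c i * F i x) + c n * \<phi> (F n)"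
    using Suc by (intro Lp_dual_lin[OF phi] in_Lp_sum[OF p]) auto
  then show ?case using Suc by simp
qed

lemma in_Lp_indicator:
  assumes p: "0 < p" and S: "S \<in> sets lborel" "emeasure lborel S < \<infinity>"
  shows "in_Lp p (indicator S :: real \<Rightarrow> real)"
    and "(\<integral>x. \<bar>indicator S x :: real\<bar> powr p \<partial>lborel) = measure lborel S"
proof -
  have eq: "(\<lambda>x. \<bar>indicator S x :: real\<bar> powr p) = indicator S"
    using p by (auto simp: indicator_def)
  show "in_Lp p (indicator S :: real \<Rightarrow> real)"
    unfolding in_Lp_def eq using S by (auto simp: integrable_indicator_iff)
  show "(\<integral>x. \<bar>indicator S x :: real\<bar> powr p \<partial>lborel) = measure lborel S"
    unfolding eq using S by simp
qed

lemma lp_norm_indicator: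
  assumes p: "0 < p" and S: "S \<in> sets lborel" "emeasure lborel S < \<infinity>"
  shows "lp_norm p (indicator S) = measure lborel S powr (1/p)"
  unfolding lp_norm_def using in_Lp_indicator(2)[OF assms] by simp

lemma abs_le_eps_bound:
  fixes u e p :: real assumes "0 < e" "1 \<le> p"
  shows "\<bar>u\<bar> \<le> e + e powr (1 - p) * \<bar>u\<bar> powr p"
proof (cases "\<bar>u\<bar> \<le> e")
  case True then show ?thesis by (simp add: add_increasing2)
next
  case False
  hence u: "e < \<bar>u\<bar>" by simp
  have "\<bar>u\<bar> = \<bar>u\<bar> powr p * \<bar>u\<bar> powr (1 - p)" using u assms
    by (simp add: powr_add[symmetric])
  also have "\<bar>u\<bar> powr (1 - p) \<le> e powr (1 - p)"
    using u assms by (intro powr_mono2') auto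
  hence "\<bar>u\<bar> powr p * \<bar>u\<bar> powr (1 - p) \<le> \<bar>u\<bar> powr p * e powr (1 - p)"
    by (intro mult_left_mono) auto
  finally show ?thesis using assms by (simp add: mult.commute add_increasing)
qed


lemma ind_bound_lemma:
  fixes u :: "real \<Rightarrow> real"
  assumes p: "1 \<le> p" and e: "0 < e"
    and um[measurable]: "u \<in> borel_measurable lborel" and ui: "integrable lborel (\<lambda>x. \<bar>u x\<bar> powr p)"
    and W: "W \<in> sets lborel" "emeasure lborel W < \<infinity>"
  shows "integrable lborel (\<lambda>x. \<bar>u x\<bar> * indicator W x)"
    and "integrable lborel (\<lambda>x. u x * indicator W x)"
    and "integrable lborel (\<lambda>x. indicator W x * u x)"
    and "(\<integral>x. \<bar>u x\<bar> * indicator W x \<partial>lborel)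
          \<le> e * measure lborel W + e powr (1 - p) * (\<integral>x. \<bar>u x\<bar> powr p * indicator W x \<partial>lborel)"
    and "(\<integral>x. \<bar>u x\<bar> powr p * indicator W x \<partial>lborel) \<le> (\<integral>x. \<bar>u x\<bar> powr p \<partial>lborel)"
    and "\<bar>\<integral>x. indicator W x * u x \<partial>lborel\<bar> \<le> (\<integral>x. \<bar>u x\<bar> * indicator W x \<partial>lborel)"
proof -
  have [measurable]: "W \<in> sets borel" using W by simp
  have iW: "integrable lborel (indicator W :: real \<Rightarrow> real)"
    using W by (simp add: integrable_indicator_iff)
  have iM: "integrable lborel (\<lambda>x. e * indicator W x + e powr (1 - p) * (\<bar>u x\<bar> powr p * indicator W x))"
    using iW ui W by (intro Bochner_Integration.integrable_add Bochner_Integration.integrable_mult_right integrable_real_mult_indicator) auto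
  have pt: "\<bar>u x\<bar> * indicator W x \<le> e * indicator W x + e powr (1 - p) * (\<bar>u x\<bar> powr p * indicator W x)" for x
    using abs_le_eps_bound[OF e p, of "u x"] by (auto simp: indicator_def)
  show i1: "integrable lborel (\<lambda>x. \<bar>u x\<bar> * indicator W x)"
    by (rule Bochner_Integration.integrable_bound[OF iM]) (use pt in \<open>auto intro!: AE_I2 order_trans[OF _ abs_ge_self]\<close>)
  show i2: "integrable lborel (\<lambda>x. u x * indicator W x)"
    by (rule Bochner_Integration.integrable_bound[OF i1]) (auto simp: indicator_def)
  then show i3: "integrable lborel (\<lambda>x. indicator W x * u x)" by (simp add: mult.commute)
  have "(\<integral>x. \<bar>u x\<bar> * indicator W x \<partial>lborel)
     \<le> (\<integral>x. e * indicator W x + e powr (1 - p) * (\<bar>u x\<bar> powr p * indicator W x) \<partial>lborel)"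
    by (rule integral_mono[OF i1 iM pt])
  also have "\<dots> = e * measure lborel W + e powr (1 - p) * (\<integral>x. \<bar>u x\<bar> powr p * indicator W x \<partial>lborel)"
    using iW ui W by (subst Bochner_Integration.integral_add) (auto intro!: integrable_real_mult_indicator)
  finally show "(\<integral>x. \<bar>u x\<bar> * indicator W x \<partial>lborel)
          \<le> e * measure lborel W + e powr (1 - p) * (\<integral>x. \<bar>u x\<bar> powr p * indicator W x \<partial>lborel)" .
  show "(\<integral>x. \<bar>u x\<bar> powr p * indicator W x \<partial>lborel) \<le> (\<integral>x. \<bar>u x\<bar> powr p \<partial>lborel)"
    using ui by (intro integral_mono integrable_real_mult_indicator) (auto simp: indicator_def)
  show "\<bar>\<integral>x. indicator W x * u x \<partial>lborel\<bar> \<le> (\<integral>x. \<bar>u x\<bar> * indicator W x \<partial>lborel)"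
  proof -
    have "\<bar>\<integral>x. indicator W x * u x \<partial>lborel\<bar> \<le> (\<integral>x. \<bar>indicator W x * u x\<bar> \<partial>lborel)"
      by (rule integral_abs_bound)
    also have "\<dots> = (\<integral>x. \<bar>u x\<bar> * indicator W x \<partial>lborel)"
      by (intro Bochner_Integration.integral_cong) (auto simp: indicator_def)
    finally show ?thesis .
  qed
qed


lemma card_separated_le:
  fixes S :: "real set"
  assumes "finite S" "0 < \<delta>" "\<forall>x\<in>S. \<forall>y\<in>S. x \<noteq> y \<longrightarrow> \<delta> \<le> \<bar>x - y\<bar>" "S \<subseteq> {a..b}" "a \<le> b"
  shows "real (card S) \<le> (b - a) / \<delta> + 1"
  using assms
proof (induction "card S" arbitrary: S b rule: less_induct)
  case less
  show ?case
  proof (cases "S = {}")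
    case True then show ?thesis using less.prems by simp
  next
    case False
    define m where "m = Max S"
    have mS: "m \<in> S" using False less.prems m_def by simp
    define T where "T = S - {m}"
    have cardS: "card S = card T + 1" using mS less.prems T_def
      by (metis False Suc_eq_plus1 card_Suc_Diff1)
    have Tle: "y \<le> m - \<delta>" if "y \<in> T" for y
    proof -
      have "y \<in> S" "y \<noteq> m" using that T_def by auto
      moreover have "y \<le> m" using \<open>y \<in> S\<close> less.prems m_def by simp
      ultimately have "\<delta> \<le> \<bar>m - y\<bar>" using less.prems(3) mS by (metis abs_minus_commute)
      then show ?thesis using \<open>y \<le> m\<close> by simp
    qed
    have mb: "m \<le> b" using mS less.prems by auto
    show ?thesis
    proof (cases "T = {}")
      case True
      then show ?thesis using cardS less.prems mb mS by (auto simp: field_simps)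
    next
      case False
      then obtain y where y: "y \<in> T" by auto
      have ay: "a \<le> y" using y T_def less.prems by auto
      have "real (card T) \<le> (m - \<delta> - a) / \<delta> + 1"
      proof (rule less.hyps)
        show "card T < card S" using cardS by simp
        show "finite T" using less.prems T_def by simp
        show "0 < \<delta>" by fact
        show "\<forall>x\<in>T. \<forall>y\<in>T. x \<noteq> y \<longrightarrow> \<delta> \<le> \<bar>x - y\<bar>" using less.prems T_def by auto
        show "T \<subseteq> {a..m - \<delta>}"
        proof
          fix y assume yT: "y \<in> T"
          then have "y \<in> S" using T_def by simp
          then have "a \<le> y" using less.prems(4) by auto
          then show "y \<in> {a..m - \<delta>}" using Tle[OF yT] by simp
        qed
        show "a \<le> m - \<delta>" using ay Tle[OF y] by simp
      qed
      also have "(m - \<delta> - a) / \<delta> + 1 = (m - a) / \<delta>" using \<open>0 < \<delta>\<close> by (simp add: field_simps)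
      finally have "real (card S) \<le> (m - a) / \<delta> + 1" using cardS by simp
      also have "\<dots> \<le> (b - a) / \<delta> + 1" using mb \<open>0 < \<delta>\<close> by (simp add: divide_right_mono)
      finally show ?thesis .
    qed
  qed
qed

lemma count_shift_le:
  fixes lam :: "nat \<Rightarrow> real"
  assumes inj: "inj lam" and d: "0 < \<delta>" and sep: "\<forall>i j. i \<noteq> j \<longrightarrow> \<delta> \<le> \<bar>lam i - lam j\<bar>"
    and r: "0 \<le> r"
  shows "(\<Sum>i<n. indicator {c..<c+r} (s + lam i) :: real) \<le> r / \<delta> + 1"
proof -
  have "(\<Sum>i<n. indicator {c..<c+r} (s + lam i) :: real) = real (card {i\<in>{..<n}. s + lam i \<in> {c..<c+r}})"
    by (simp add: indicator_def sum.If_cases Int_def)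
  also have "card {i\<in>{..<n}. s + lam i \<in> {c..<c+r}} = card (lam ` {i\<in>{..<n}. s + lam i \<in> {c..<c+r}})"
    using inj by (simp add: card_image inj_on_subset)
  also have "real \<dots> \<le> ((c + r - s) - (c - s)) / \<delta> + 1"
  proof (rule card_separated_le)
    show "finite (lam ` {i \<in> {..<n}. s + lam i \<in> {c..<c + r}})" by simp
    show "0 < \<delta>" by fact
    show "\<forall>x\<in>lam ` {i \<in> {..<n}. s + lam i \<in> {c..<c + r}}. \<forall>y\<in>lam ` {i \<in> {..<n}. s + lam i \<in> {c..<c + r}}. x \<noteq> y \<longrightarrow> \<delta> \<le> \<bar>x - y\<bar>"
      using sep by (auto; metis)
    show "lam ` {i \<in> {..<n}. s + lam i \<in> {c..<c + r}} \<subseteq> {c - s..c + r - s}" by auto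
    show "c - s \<le> c + r - s" using r by simp
  qed
  finally show ?thesis by simp
qed


lemma disc_sum_bound:
  fixes f :: "real \<Rightarrow> real" and lam :: "nat \<Rightarrow> real"
  assumes fi: "integrable lborel f" and inj: "inj lam" and d: "0 < \<delta>"
    and sep: "\<forall>i j. i \<noteq> j \<longrightarrow> \<delta> \<le> \<bar>lam i - lam j\<bar>" and r: "0 \<le> r"
  shows "(\<Sum>i<n. \<integral>t. \<bar>f (t - lam i)\<bar> * indicator {c..<c+r} t \<partial>lborel)
          \<le> (\<integral>t. \<bar>f t\<bar> \<partial>lborel) * (r / \<delta> + 1)"
proof -
  have fm[measurable]: "f \<in> borel_measurable lborel" using fi by auto
  have ia: "integrable lborel (\<lambda>s. \<bar>f s\<bar>)" using fi by auto
  have it: "integrable lborel (\<lambda>s. \<bar>f s\<bar> * indicator {c..<c+r} (s + lam i))" for i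
    by (rule Bochner_Integration.integrable_bound[OF ia]) (auto simp: indicator_def)
  have eq: "(\<integral>t. \<bar>f (t - lam i)\<bar> * indicator {c..<c+r} t \<partial>lborel)
        = (\<integral>s. \<bar>f s\<bar> * indicator {c..<c+r} (s + lam i) \<partial>lborel)" for i
    using integral_shift[of "\<lambda>s. \<bar>f s\<bar> * indicator {c..<c+r} (s + lam i)" "lam i"] by simp
  have "(\<Sum>i<n. \<integral>t. \<bar>f (t - lam i)\<bar> * indicator {c..<c+r} t \<partial>lborel)
      = (\<integral>s. (\<Sum>i<n. \<bar>f s\<bar> * indicator {c..<c+r} (s + lam i)) \<partial>lborel)"
    unfolding eq using it by (subst Bochner_Integration.integral_sum) auto
  also have "\<dots> = (\<integral>s. \<bar>f s\<bar> * (\<Sum>i<n. indicator {c..<c+r} (s + lam i)) \<partial>lborel)"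
    by (simp add: sum_distrib_left)
  also have "\<dots> \<le> (\<integral>s. \<bar>f s\<bar> * (r / \<delta> + 1) \<partial>lborel)"
  proof (rule integral_mono)
    show "integrable lborel (\<lambda>s. \<bar>f s\<bar> * (\<Sum>i<n. indicator {c..<c+r} (s + lam i)))"
      unfolding sum_distrib_left using it by (intro Bochner_Integration.integrable_sum) auto
    show "integrable lborel (\<lambda>s. \<bar>f s\<bar> * (r / \<delta> + 1))" using ia by auto
    show "\<bar>f s\<bar> * (\<Sum>i<n. indicator {c..<c+r} (s + lam i)) \<le> \<bar>f s\<bar> * (r / \<delta> + 1)" for s
      using count_shift_le[OF inj d sep r, where n=n and c=c and s=s] by (intro mult_left_mono) auto
  qed
  also have "\<dots> = (\<integral>t. \<bar>f t\<bar> \<partial>lborel) * (r / \<delta> + 1)" by simp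
  finally show ?thesis .
qed

lemma partition_indicator:
  fixes c :: real and m :: nat
  assumes m: "0 < m"
  shows "(\<Sum>k<m. indicator {c + real k / m..<c + real (Suc k) / m} x :: real) = indicator {c..<c+1} x"
proof -
  have disj: "\<And>k k'. k < m \<Longrightarrow> k' < m \<Longrightarrow> x \<in> {c + real k / m..<c + real (Suc k) / m}
       \<Longrightarrow> x \<in> {c + real k' / m..<c + real (Suc k') / m} \<Longrightarrow> k = k'"
  proof (rule ccontr)
    fix k k' assume a: "k < m" "k' < m" "x \<in> {c + real k / m..<c + real (Suc k) / m}"
       "x \<in> {c + real k' / m..<c + real (Suc k') / m}" "k \<noteq> k'"
    then consider "k < k'" | "k' < k" by linarith
    then show False
    proof cases
      case 1 then have "real (Suc k) \<le> real k'" by simp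
      then have "real (Suc k) / m \<le> real k' / m" using m by (simp add: divide_right_mono)
      then show False using a by auto
    next
      case 2 then have "real (Suc k') \<le> real k" by simp
      then have "real (Suc k') / m \<le> real k / m" using m by (simp add: divide_right_mono)
      then show False using a by auto
    qed
  qed
  show ?thesis
  proof (cases "x \<in> {c..<c+1}")
    case True
    define k where "k = nat \<lfloor>(x - c) * m\<rfloor>"
    have x0: "0 \<le> (x - c) * m" using True by simp
    have x1: "(x - c) * m < m" using True m by simp
    have fl: "real_of_int \<lfloor>(x - c) * m\<rfloor> = real k" using x0 k_def by simp
    have "real_of_int \<lfloor>(x - c) * m\<rfloor> < real m" using x1 by (meson floor_le_iff le_less_trans of_int_floor_le)
    then have km: "k < m" using fl by simp
    have "real k \<le> (x - c) * m" using fl by (metis of_int_floor_le)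
    moreover have "(x - c) * m < real k + 1" using fl by (metis real_of_int_floor_add_one_gt)
    ultimately have xk: "x \<in> {c + real k / m..<c + real (Suc k) / m}" using m
      by (simp add: field_simps)
    have "(\<Sum>k'<m. indicator {c + real k' / m..<c + real (Suc k') / m} x :: real)
        = (\<Sum>k'\<in>{k}. indicator {c + real k' / m..<c + real (Suc k') / m} x)"
      using km disj xk by (intro sum.mono_neutral_right) (auto simp: indicator_def)
    then show ?thesis using xk True by simp
  next
    case False
    have "x \<notin> {c + real k / m..<c + real (Suc k) / m}" if "k < m" for k
    proof
      assume xk: "x \<in> {c + real k / m..<c + real (Suc k) / m}"
      have "0 \<le> real k / m" using m by simp
      moreover have "real (Suc k) / m \<le> 1" using that m by simp
      moreover have "c + real k / m \<le> x" "x < c + real (Suc k) / m" using xk by auto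
      ultimately have "c \<le> x" "x < c + 1" by linarith+
      then show False using False by simp
    qed
    then have "(\<Sum>k<m. indicator {c + real k / m..<c + real (Suc k) / m} x :: real) = 0"
      by (intro sum.neutral) (simp add: indicator_def)
    then show ?thesis using False by simp
  qed
qed


lemma lp_norm_nonneg: "0 \<le> lp_norm p h"
  unfolding lp_norm_def by simp

lemma dual_norm_bound:
  assumes phi: "Lp_dual p \<phi>" and h: "in_Lp p h"
  shows "\<bar>\<phi> h\<bar> \<le> dual_norm p \<phi> * lp_norm p h" and "0 \<le> dual_norm p \<phi>"
proof -
  define D where "D = {C. 0 \<le> C \<and> (\<forall>h. in_Lp p h \<longrightarrow> \<bar>\<phi> h\<bar> \<le> C * lp_norm p h)}"
  obtain C where C: "\<And>h. in_Lp p h \<Longrightarrow> \<bar>\<phi> h\<bar> \<le> C * lp_norm p h"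
    using phi unfolding Lp_dual_def by blast
  have "max C 0 \<in> D" unfolding D_def
  proof (intro CollectI conjI allI impI)
    fix h assume "in_Lp p h"
    then have "\<bar>\<phi> h\<bar> \<le> C * lp_norm p h" by (rule C)
    also have "\<dots> \<le> max C 0 * lp_norm p h" by (intro mult_right_mono lp_norm_nonneg) simp
    finally show "\<bar>\<phi> h\<bar> \<le> max C 0 * lp_norm p h" .
  qed simp
  then have ne: "D \<noteq> {}" by auto
  have bdd: "bdd_below D" unfolding D_def by (rule bdd_belowI[of _ 0]) auto
  have dn: "dual_norm p \<phi> = Inf D" unfolding dual_norm_def D_def by simp
  show "0 \<le> dual_norm p \<phi>" unfolding dn using ne by (intro cInf_greatest) (auto simp: D_def)
  show "\<bar>\<phi> h\<bar> \<le> dual_norm p \<phi> * lp_norm p h"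
  proof (cases "lp_norm p h = 0")
    case True
    have "\<bar>\<phi> h\<bar> \<le> max C 0 * lp_norm p h" using \<open>max C 0 \<in> D\<close> h unfolding D_def by blast
    then show ?thesis using True by simp
  next
    case False
    then have pos: "0 < lp_norm p h" using lp_norm_nonneg[of p h] by simp
    have "\<bar>\<phi> h\<bar> / lp_norm p h \<le> Inf D"
    proof (rule cInf_greatest[OF ne])
      fix C' assume "C' \<in> D"
      then have "\<bar>\<phi> h\<bar> \<le> C' * lp_norm p h" using h unfolding D_def by blast
      then show "\<bar>\<phi> h\<bar> / lp_norm p h \<le> C'" using pos by (simp add: divide_le_eq)
    qed
    then show ?thesis using pos dn by (simp add: divide_le_eq)
  qed
qed

lemma x_in_Lp: "in_Lp p f \<Longrightarrow> in_Lp p (translate f a)" by (rule in_Lp_translate)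

lemma part1_K:
  fixes f :: "real \<Rightarrow> real" and lam :: "nat \<Rightarrow> real"
  assumes p: "1 < p" and fLp: "in_Lp p f"
    and bm: "bounded_minimal_Lp p (\<lambda>i. translate f (lam i))"
  obtains xs K where "\<And>i. Lp_dual p (xs i)"
    "\<And>i j. xs i (translate f (lam j)) = (if i = j then 1 else 0)"
    "0 \<le> K" "\<And>i h. in_Lp p h \<Longrightarrow> \<bar>xs i h\<bar> \<le> K * lp_norm p h"
proof -
  obtain xs M where xs: "\<And>i. Lp_dual p (xs i)"
    "\<And>i j. xs i (translate f (lam j)) = (if i = j then 1 else 0)"
    and M: "\<And>i. lp_norm p (translate f (lam i)) * dual_norm p (xs i) \<le> M"
    using bm unfolding bounded_minimal_Lp_def by blast
  define L where "L = lp_norm p f"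
  have L0: "0 \<le> L" unfolding L_def by (rule lp_norm_nonneg)
  have Lpos: "0 < L"
  proof (rule ccontr)
    assume "\<not> 0 < L" then have "L = 0" using L0 by simp
    have "\<bar>xs 0 (translate f (lam 0))\<bar> \<le> dual_norm p (xs 0) * lp_norm p (translate f (lam 0))"
      by (rule dual_norm_bound(1)[OF xs(1) in_Lp_translate[OF fLp]])
    then show False using \<open>L = 0\<close> xs(2)[of 0 0] by (simp add: lp_norm_translate L_def)
  qed
  have M0: "0 \<le> M" using M[of 0] L0 dual_norm_bound(2)[OF xs(1) in_Lp_translate[OF fLp]]
    by (smt (verit) L_def lp_norm_translate mult_nonneg_nonneg)
  show ?thesis
  proof (rule that[OF xs(1) xs(2), of "M / L"])
    show "0 \<le> M / L" using M0 L0 by simp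
    fix i h assume h: "in_Lp p h"
    have dn: "dual_norm p (xs i) \<le> M / L" using M[of i] Lpos
      by (simp add: lp_norm_translate L_def[symmetric] pos_le_divide_eq mult.commute)
    have "\<bar>xs i h\<bar> \<le> dual_norm p (xs i) * lp_norm p h" by (rule dual_norm_bound(1)[OF xs(1) h])
    also have "\<dots> \<le> M / L * lp_norm p h" using dn by (intro mult_right_mono lp_norm_nonneg)
    finally show "\<bar>xs i h\<bar> \<le> M / L * lp_norm p h" .
  qed
qed


lemma int_pow_eq: "0 < p \<Longrightarrow> (\<integral>x. \<bar>u x\<bar> powr p \<partial>lborel) = lp_norm p u powr p"
  unfolding lp_norm_def by (simp add: powr_powr)

lemma int_pow_lt:
  assumes "0 < p" "lp_norm p u < \<eta>"
  shows "(\<integral>x. \<bar>u x\<bar> powr p \<partial>lborel) < \<eta> powr p"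
  using assms lp_norm_nonneg[of p u] by (simp add: int_pow_eq powr_less_mono2)

lemma part1_interval:
  fixes f :: "real \<Rightarrow> real" and lam :: "nat \<Rightarrow> real"
  assumes p: "1 < p" and fLp: "in_Lp p f"
    and fund: "fundamental_Lp p (\<lambda>i. translate f (lam i))"
    and xs: "\<And>i. Lp_dual p (xs i)"
    "\<And>i j. xs i (translate f (lam j)) = (if i = j then 1 else 0)"
    and K: "0 \<le> K" "\<And>i h. in_Lp p h \<Longrightarrow> \<bar>xs i h\<bar> \<le> K * lp_norm p h"
    and r: "0 < r" and e: "0 < e" and eta: "0 < \<eta>"
  shows "\<exists>n. r \<le> e * r + e powr (1 - p) * \<eta> powr p
     + K * (r powr (1/p) + \<eta>) * (\<Sum>j<n. \<integral>t. \<bar>f (t - lam j)\<bar> * indicator {c..<c+r} t \<partial>lborel)"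
proof -
  have p0: "0 < p" using p by simp
  define I where "I = {c..<c+r}"
  have Is: "I \<in> sets lborel" "emeasure lborel I < \<infinity>" unfolding I_def using r by auto
  have mI: "measure lborel I = r" unfolding I_def using r by simp
  have indLp: "in_Lp p (indicator I :: real \<Rightarrow> real)" by (rule in_Lp_indicator(1)[OF p0 Is])
  have lpI: "lp_norm p (indicator I :: real \<Rightarrow> real) = r powr (1/p)"
    using lp_norm_indicator[OF p0 Is] mI by simp
  define x where "x = (\<lambda>i. translate f (lam i))"
  have xLp: "in_Lp p (x i)" for i unfolding x_def by (rule in_Lp_translate[OF fLp])
  obtain n cc where nc: "lp_norm p (\<lambda>t. indicator I t - (\<Sum>i<n. cc i * x i t)) < \<eta>"
    using fund indLp eta unfolding fundamental_Lp_def x_def by blast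
  define s where "s = (\<lambda>t. \<Sum>i<n. cc i * x i t)"
  define u where "u = (\<lambda>t. indicator I t - s t)"
  have sLp: "in_Lp p s" unfolding s_def using xLp by (intro in_Lp_sum[OF p0])
  have uLp: "in_Lp p u"
    using in_Lp_lin[OF p0 indLp sLp, of 1 "-1"] unfolding u_def by simp
  have lpu: "lp_norm p u < \<eta>" using nc unfolding u_def s_def .
  have um[measurable]: "u \<in> borel_measurable lborel" and ui: "integrable lborel (\<lambda>t. \<bar>u t\<bar> powr p)"
    using uLp unfolding in_Lp_def by auto
  have intu: "(\<integral>t. \<bar>u t\<bar> powr p \<partial>lborel) < \<eta> powr p" by (rule int_pow_lt[OF p0 lpu])
  have cc_eq: "xs j s = cc j" if "j < n" for j
  proof -
    have "xs j s = (\<Sum>i<n. cc i * xs j (x i))"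
      unfolding s_def using xLp by (intro Lp_dual_sum[OF xs(1) p0])
    also have "\<dots> = (\<Sum>i<n. cc i * (if j = i then 1 else 0))" unfolding x_def using xs(2) by simp
    also have "\<dots> = (\<Sum>i<n. if j = i then cc i else 0)" by (intro sum.cong) auto
    also have "\<dots> = cc j" using that by (simp add: sum.delta)
    finally show ?thesis .
  qed
  have cc_bd: "\<bar>cc j\<bar> \<le> K * (r powr (1/p) + \<eta>)" if "j < n" for j
  proof -
    have "s = (\<lambda>t. 1 * indicator I t + (-1) * u t)" unfolding u_def by auto
    then have "xs j s = 1 * xs j (indicator I) + (-1) * xs j u"
      using Lp_dual_lin[OF xs(1) indLp uLp, of j 1 "-1"] by simp
    then have "\<bar>cc j\<bar> \<le> \<bar>xs j (indicator I)\<bar> + \<bar>xs j u\<bar>" using cc_eq[OF that] by simp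
    also have "\<dots> \<le> K * r powr (1/p) + K * \<eta>"
      using K(2)[OF indLp, of j] K(2)[OF uLp, of j] lpI lpu K(1)
      by (smt (verit) mult_left_mono)
    finally show ?thesis by (simp add: distrib_left)
  qed
  have fi: "integrable lborel (\<lambda>t. indicator I t * x j t)" for j
    using ind_bound_lemma(3)[OF _ _ _ _ Is, of p 1 "x j"] xLp[of j] p unfolding in_Lp_def by auto
  have r_eq: "r = (\<integral>t. indicator I t * s t \<partial>lborel) + (\<integral>t. indicator I t * u t \<partial>lborel)"
  proof -
    have iu: "integrable lborel (\<lambda>t. indicator I t * u t)"
      using ind_bound_lemma(3)[OF _ _ um ui Is, of 1] p by simp
    have iss: "integrable lborel (\<lambda>t. indicator I t * s t)"
      unfolding s_def sum_distrib_left using fi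
      by (intro Bochner_Integration.integrable_sum) (auto simp: mult_ac intro: integrable_mult_right)
    have "(\<integral>t. indicator I t * s t \<partial>lborel) + (\<integral>t. indicator I t * u t \<partial>lborel)
        = (\<integral>t. indicator I t * s t + indicator I t * u t \<partial>lborel)"
      using iu iss by simp
    also have "\<dots> = (\<integral>t. indicator I t \<partial>lborel)"
      by (intro Bochner_Integration.integral_cong) (auto simp: u_def indicator_def)
    also have "\<dots> = r" using Is mI by simp
    finally show ?thesis by simp
  qed
  have s_int: "(\<integral>t. indicator I t * s t \<partial>lborel) = (\<Sum>j<n. cc j * (\<integral>t. indicator I t * x j t \<partial>lborel))"
  proof -
    have "(\<integral>t. indicator I t * s t \<partial>lborel) = (\<integral>t. (\<Sum>j<n. cc j * (indicator I t * x j t)) \<partial>lborel)"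
      unfolding s_def by (simp add: sum_distrib_left mult_ac)
    also have "\<dots> = (\<Sum>j<n. cc j * (\<integral>t. indicator I t * x j t \<partial>lborel))"
      using fi by (subst Bochner_Integration.integral_sum) auto
    finally show ?thesis .
  qed
  have xj_bd: "\<bar>\<integral>t. indicator I t * x j t \<partial>lborel\<bar> \<le> (\<integral>t. \<bar>f (t - lam j)\<bar> * indicator I t \<partial>lborel)" for j
    using ind_bound_lemma(6)[OF _ _ _ _ Is, of p 1 "x j"] xLp[of j] p unfolding in_Lp_def x_def translate_def
    by auto
  have xj_nn: "0 \<le> (\<integral>t. \<bar>f (t - lam j)\<bar> * indicator I t \<partial>lborel)" for j
    by (intro integral_nonneg_AE) auto
  have "\<bar>\<integral>t. indicator I t * s t \<partial>lborel\<bar>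
      \<le> K * (r powr (1/p) + \<eta>) * (\<Sum>j<n. \<integral>t. \<bar>f (t - lam j)\<bar> * indicator I t \<partial>lborel)"
  proof -
    have "\<bar>\<integral>t. indicator I t * s t \<partial>lborel\<bar> \<le> (\<Sum>j<n. \<bar>cc j\<bar> * \<bar>\<integral>t. indicator I t * x j t \<partial>lborel\<bar>)"
      unfolding s_int by (rule order_trans[OF sum_abs]) (simp add: abs_mult)
    also have "\<dots> \<le> (\<Sum>j<n. K * (r powr (1/p) + \<eta>) * (\<integral>t. \<bar>f (t - lam j)\<bar> * indicator I t \<partial>lborel))"
      using cc_bd xj_bd K(1) eta by (intro sum_mono mult_mono) auto
    finally show ?thesis by (simp add: sum_distrib_left)
  qed
  moreover have "\<bar>\<integral>t. indicator I t * u t \<partial>lborel\<bar> \<le> e * r + e powr (1 - p) * \<eta> powr p"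
  proof -
    have "\<bar>\<integral>t. indicator I t * u t \<partial>lborel\<bar> \<le> (\<integral>t. \<bar>u t\<bar> * indicator I t \<partial>lborel)"
      by (rule ind_bound_lemma(6)[OF _ e um ui Is]) (use p in simp)
    also have "\<dots> \<le> e * r + e powr (1 - p) * (\<integral>t. \<bar>u t\<bar> powr p * indicator I t \<partial>lborel)"
      using ind_bound_lemma(4)[OF _ e um ui Is] p mI by simp
    also have "\<dots> \<le> e * r + e powr (1 - p) * \<eta> powr p"
      using ind_bound_lemma(5)[OF _ e um ui Is] p intu by (intro add_left_mono mult_left_mono) auto
    finally show ?thesis .
  qed
  ultimately have "r \<le> e * r + e powr (1 - p) * \<eta> powr p
     + K * (r powr (1/p) + \<eta>) * (\<Sum>j<n. \<integral>t. \<bar>f (t - lam j)\<bar> * indicator I t \<partial>lborel)"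
    using r_eq by linarith
  then show ?thesis unfolding I_def by blast
qed


lemma sum_int_partition:
  fixes f :: "real \<Rightarrow> real" and lam :: "nat \<Rightarrow> real" and m :: nat
  assumes fi: "integrable lborel f" and m: "0 < m"
  shows "(\<Sum>k<m. \<Sum>j<N. \<integral>t. \<bar>f (t - lam j)\<bar> * indicator {c + real k / m..<c + real (Suc k) / m} t \<partial>lborel)
       = (\<Sum>j<N. \<integral>t. \<bar>f (t - lam j)\<bar> * indicator {c..<c+1} t \<partial>lborel)"
proof -
  have ia: "integrable lborel (\<lambda>t. \<bar>f (t - lam j)\<bar>)" for j
    using fi integrable_shift_iff[of f "lam j"] by auto
  have it: "integrable lborel (\<lambda>t. \<bar>f (t - lam j)\<bar> * indicator S t)" if "S \<in> sets lborel" for j S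
    using ia that by (intro integrable_real_mult_indicator) auto
  have "(\<Sum>k<m. \<Sum>j<N. \<integral>t. \<bar>f (t - lam j)\<bar> * indicator {c + real k / m..<c + real (Suc k) / m} t \<partial>lborel)
      = (\<Sum>j<N. \<Sum>k<m. \<integral>t. \<bar>f (t - lam j)\<bar> * indicator {c + real k / m..<c + real (Suc k) / m} t \<partial>lborel)"
    by (rule sum.swap)
  also have "\<dots> = (\<Sum>j<N. \<integral>t. (\<Sum>k<m. \<bar>f (t - lam j)\<bar> * indicator {c + real k / m..<c + real (Suc k) / m} t) \<partial>lborel)"
    by (intro sum.cong refl, subst Bochner_Integration.integral_sum) (auto intro!: it)
  also have "\<dots> = (\<Sum>j<N. \<integral>t. \<bar>f (t - lam j)\<bar> * indicator {c..<c+1} t \<partial>lborel)"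
    by (intro sum.cong refl Bochner_Integration.integral_cong)
       (simp only: sum_distrib_left[symmetric] partition_indicator[OF m])
  finally show ?thesis .
qed

lemma part1:
  fixes f :: "real \<Rightarrow> real" and lam :: "nat \<Rightarrow> real"
  assumes p: "1 < p" and fLp: "in_Lp p f" and fi: "integrable lborel f"
    and inj: "inj lam" and ud: "uniformly_discrete_seq lam"
    and fund: "fundamental_Lp p (\<lambda>i. translate f (lam i))"
    and bm: "bounded_minimal_Lp p (\<lambda>i. translate f (lam i))"
  shows False
proof -
  have p0: "0 < p" using p by simp
  obtain \<delta> where d: "0 < \<delta>" and sep: "\<forall>i j. i \<noteq> j \<longrightarrow> \<delta> \<le> \<bar>lam i - lam j\<bar>"
    using ud unfolding uniformly_discrete_seq_def by blast
  obtain xs K where xs: "\<And>i. Lp_dual p (xs i)"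
    "\<And>i j. xs i (translate f (lam j)) = (if i = j then 1 else 0)"
    and K: "0 \<le> K" "\<And>i h. in_Lp p h \<Longrightarrow> \<bar>xs i h\<bar> \<le> K * lp_norm p h"
    using part1_K[OF p fLp bm] by blast
  define A where "A = (\<integral>t. \<bar>f t\<bar> \<partial>lborel) * (1 / \<delta> + 1)"
  have A0: "0 \<le> A" unfolding A_def using d by (intro mult_nonneg_nonneg integral_nonneg_AE) auto
  obtain m :: nat where mbig: "(4 * K * A + 1) powr p < real m"
    using reals_Archimedean2 by blast
  have m0: "0 < m"
  proof -
    have "0 \<le> K * A" using K A0 by simp
    then have "0 < (4 * K * A + 1) powr p" by simp
    then show ?thesis using mbig by linarith
  qed
  have mp: "4 * K * A + 1 < real m powr (1/p)"
  proof -
    have "((4 * K * A + 1) powr p) powr (1/p) < real m powr (1/p)"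
      using mbig p0 K A0 by (intro powr_less_mono2) auto
    moreover have "0 \<le> K * A" using K A0 by simp
    ultimately show ?thesis using p0 by (simp add: powr_powr)
  qed
  define e :: real where "e = 1/4"
  define \<eta> where "\<eta> = (e powr (p - 1) / (4 * m)) powr (1/p)"
  define \<rho> where "\<rho> = (1 / real m) powr (1/p)"
  have e0: "0 < e" unfolding e_def by simp
  have eta0: "0 < \<eta>" unfolding \<eta>_def using m0 e0 by simp
  have etap: "e powr (1 - p) * \<eta> powr p = 1 / (4 * m)"
  proof -
    have "\<eta> powr p = e powr (p - 1) / (4 * m)" unfolding \<eta>_def using m0 e0 p0 by (simp add: powr_powr)
    then have "e powr (1 - p) * \<eta> powr p = (e powr (1 - p) * e powr (p - 1)) / (4 * m)" by simp
    also have "e powr (1 - p) * e powr (p - 1) = 1" using e0 by (simp add: powr_add[symmetric])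
    finally show ?thesis by simp
  qed
  have eta_rho: "\<eta> \<le> \<rho>"
  proof -
    have "e powr (p - 1) \<le> 1" unfolding e_def using p by (intro powr_le1) auto
    then have "e powr (p - 1) / (4 * m) \<le> 1 / real m" using m0 by (simp add: field_simps)
    then show ?thesis unfolding \<eta>_def \<rho>_def using p0 e0 by (intro powr_mono2) auto
  qed
  have rho_m: "\<rho> * real m powr (1/p) = 1"
    unfolding \<rho>_def using m0 by (simp add: powr_mult[symmetric])
  have rho0: "0 \<le> \<rho>" unfolding \<rho>_def by simp
  have KA: "4 * K * A * \<rho> < 1"
  proof -
    have "(4 * K * A + 1) * \<rho> \<le> real m powr (1/p) * \<rho>" using mp rho0 by (intro mult_right_mono) auto
    then have "(4 * K * A + 1) * \<rho> \<le> 1" using rho_m by (simp add: mult.commute)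
    moreover have "0 < \<rho>" unfolding \<rho>_def using m0 by simp
    ultimately show ?thesis by (simp add: algebra_simps)
  qed
  define T where "T = (\<lambda>n k. (\<Sum>j<n. \<integral>t. \<bar>f (t - lam j)\<bar> * indicator {0 + real k / m..<0 + real (Suc k) / m} t \<partial>lborel))"
  have step: "\<exists>n. 1 / real m \<le> e * (1 / m) + 1 / (4 * m) + K * (\<rho> + \<eta>) * T n k" for k
  proof -
    obtain n where n: "1 / real m \<le> e * (1 / m) + e powr (1 - p) * \<eta> powr p
     + K * ((1 / real m) powr (1/p) + \<eta>) * (\<Sum>j<n. \<integral>t. \<bar>f (t - lam j)\<bar> * indicator {real k / m..<real k / m + 1 / m} t \<partial>lborel)"
      using part1_interval[OF p fLp fund xs K _ e0 eta0, of "1 / real m" "real k / m"] m0 by auto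
    have "real k / m + 1 / m = 0 + real (Suc k) / m" by (simp add: add_divide_distrib)
    then show ?thesis using n etap unfolding T_def \<rho>_def by auto
  qed
  then obtain nn where nn: "\<And>k. 1 / real m \<le> e * (1 / m) + 1 / (4 * m) + K * (\<rho> + \<eta>) * T (nn k) k"
    by metis
  define N where "N = (\<Sum>k<m. nn k)"
  have Tmono: "T (nn k) k \<le> T N k" if "k < m" for k
  proof -
    have "nn k \<le> N" unfolding N_def using that by (intro member_le_sum) auto
    then show ?thesis unfolding T_def
      by (intro sum_mono2) (auto intro!: integral_nonneg_AE)
  qed
  have KRE: "0 \<le> K * (\<rho> + \<eta>)" using K rho0 eta0 by simp
  have "1 = (\<Sum>k<m. 1 / real m)" using m0 by simp
  also have "\<dots> \<le> (\<Sum>k<m. e * (1 / m) + 1 / (4 * m) + K * (\<rho> + \<eta>) * T N k)"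
  proof (intro sum_mono)
    fix k assume "k \<in> {..<m}"
    then have "K * (\<rho> + \<eta>) * T (nn k) k \<le> K * (\<rho> + \<eta>) * T N k"
      using Tmono KRE by (intro mult_left_mono) auto
    then show "1 / real m \<le> e * (1 / m) + 1 / (4 * m) + K * (\<rho> + \<eta>) * T N k"
      using nn[of k] by linarith
  qed
  also have "\<dots> = 1/2 + K * (\<rho> + \<eta>) * (\<Sum>k<m. T N k)"
    using m0 by (simp add: sum.distrib sum_distrib_left[symmetric] e_def)
  finally have one: "1 \<le> 1/2 + K * (\<rho> + \<eta>) * (\<Sum>k<m. T N k)" .
  have "(\<Sum>k<m. T N k) = (\<Sum>j<N. \<integral>t. \<bar>f (t - lam j)\<bar> * indicator {0..<0+1} t \<partial>lborel)"
    unfolding T_def by (rule sum_int_partition[OF fi m0])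
  also have "\<dots> \<le> A" unfolding A_def using disc_sum_bound[OF fi inj d sep, where r=1 and n=N and c=0] by simp
  finally have TA: "(\<Sum>k<m. T N k) \<le> A" .
  have "K * (\<rho> + \<eta>) * (\<Sum>k<m. T N k) \<le> K * (\<rho> + \<eta>) * A"
    using TA KRE by (rule mult_left_mono)
  also have "\<dots> \<le> K * (2 * \<rho>) * A"
    using eta_rho K A0 by (intro mult_right_mono mult_left_mono) auto
  finally have "K * (\<rho> + \<eta>) * (\<Sum>k<m. T N k) \<le> 2 * (K * A * \<rho>)" by (simp add: mult_ac)
  then show False using KA one by linarith
qed



locale fctx =
  fixes p q :: real and f :: "real \<Rightarrow> real" and lam :: "nat \<Rightarrow> real" and g :: "nat \<Rightarrow> real \<Rightarrow> real"
  assumes p: "1 < p" and q: "1 < q" and fLp: "in_Lp p f" and fi: "integrable lborel f"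
    and inj: "inj lam" and ud: "uniformly_discrete_seq lam"
    and gLq: "\<And>i. in_Lp q (g i)" and frame: "Lp_frame p (\<lambda>i. translate f (lam i)) g"

context fctx
begin

lemma p0: "0 < p" using p by simp

lemma xLp: "in_Lp p (translate f (lam i))" by (rule in_Lp_translate[OF fLp])

lemma SLp: "in_Lp p (\<lambda>t. \<Sum>i<n. c i * translate f (lam i) t)"
  using xLp by (intro in_Lp_sum[OF p0])

lemma uLp:
  assumes h: "in_Lp p h" shows "in_Lp p (\<lambda>t. h t - (\<Sum>i<n. c i * translate f (lam i) t))"
  using in_Lp_lin[OF p0 h SLp[where n=n and c=c], of 1 "-1"] by simp

lemma F0:
  assumes h: "in_Lp p h"
  shows "(\<lambda>n. \<integral>t. \<bar>h t - (\<Sum>i<n. (\<integral>s. h s * g i s \<partial>lborel) * translate f (lam i) t)\<bar> powr p \<partial>lborel) \<longlonglongrightarrow> 0"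
proof -
  have L: "(\<lambda>n. lp_norm p (\<lambda>t. h t - (\<Sum>i<n. (\<integral>s. h s * g i s \<partial>lborel) * translate f (lam i) t))) \<longlonglongrightarrow> 0"
    using frame h unfolding Lp_frame_def by blast
  have "(\<lambda>n. lp_norm p (\<lambda>t. h t - (\<Sum>i<n. (\<integral>s. h s * g i s \<partial>lborel) * translate f (lam i) t)) powr p) \<longlonglongrightarrow> 0"
    by (rule tendsto_zero_powrI[OF L tendsto_const]) (auto simp: lp_norm_nonneg p0)
  then show ?thesis by (simp add: int_pow_eq[OF p0])
qed

lemma int_ind_small:
  assumes u: "in_Lp p u" and W: "W \<in> sets lborel" "emeasure lborel W < \<infinity>" and e: "0 < e"
  shows "\<bar>\<integral>t. indicator W t * u t \<partial>lborel\<bar> \<le> e * measure lborel W + e powr (1 - p) * (\<integral>t. \<bar>u t\<bar> powr p \<partial>lborel)"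
proof -
  have um: "u \<in> borel_measurable lborel" and ui: "integrable lborel (\<lambda>t. \<bar>u t\<bar> powr p)"
    using u unfolding in_Lp_def by auto
  have p1: "1 \<le> p" using p by simp
  have "\<bar>\<integral>t. indicator W t * u t \<partial>lborel\<bar> \<le> (\<integral>t. \<bar>u t\<bar> * indicator W t \<partial>lborel)"
    by (rule ind_bound_lemma(6)[OF p1 e um ui W])
  also have "\<dots> \<le> e * measure lborel W + e powr (1 - p) * (\<integral>t. \<bar>u t\<bar> powr p * indicator W t \<partial>lborel)"
    by (rule ind_bound_lemma(4)[OF p1 e um ui W])
  also have "\<dots> \<le> e * measure lborel W + e powr (1 - p) * (\<integral>t. \<bar>u t\<bar> powr p \<partial>lborel)"
    using ind_bound_lemma(5)[OF p1 e um ui W] by (intro add_left_mono mult_left_mono) auto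
  finally show ?thesis .
qed

lemma F1:
  assumes r: "0 < r"
  shows "(\<lambda>n. \<Sum>i<n. (\<integral>s. indicator {c..<c+r} s * g i s \<partial>lborel) * (\<integral>t. indicator {c..<c+r} t * translate f (lam i) t \<partial>lborel)) \<longlonglongrightarrow> r"
proof -
  define I where "I = {c..<c+r}"
  have Is: "I \<in> sets lborel" "emeasure lborel I < \<infinity>" unfolding I_def using r by auto
  have mI: "measure lborel I = r" unfolding I_def using r by simp
  have indLp: "in_Lp p (indicator I :: real \<Rightarrow> real)" by (rule in_Lp_indicator(1)[OF p0 Is])
  define a where "a = (\<lambda>i. \<integral>s. indicator I s * g i s \<partial>lborel)"
  define u where "u = (\<lambda>n t. indicator I t - (\<Sum>i<n. a i * translate f (lam i) t))"
  have uL: "in_Lp p (u n)" for n unfolding u_def by (rule uLp[OF indLp])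
  have D: "(\<lambda>n. \<integral>t. \<bar>u n t\<bar> powr p \<partial>lborel) \<longlonglongrightarrow> 0"
    using F0[OF indLp] unfolding u_def a_def .
  have fi': "integrable lborel (\<lambda>t. indicator I t * translate f (lam j) t)" for j
    using ind_bound_lemma(3)[OF _ _ _ _ Is, of p 1 "translate f (lam j)"] xLp[of j] p unfolding in_Lp_def by auto
  have iu: "integrable lborel (\<lambda>t. indicator I t * u n t)" for n
    using ind_bound_lemma(3)[OF _ _ _ _ Is, of p 1 "u n"] uL[of n] p unfolding in_Lp_def by auto
  have eq: "(\<Sum>i<n. a i * (\<integral>t. indicator I t * translate f (lam i) t \<partial>lborel)) = r - (\<integral>t. indicator I t * u n t \<partial>lborel)" for n
  proof -
    have "(\<integral>t. indicator I t * u n t \<partial>lborel)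
        = (\<integral>t. indicator I t - (\<Sum>i<n. a i * (indicator I t * translate f (lam i) t)) \<partial>lborel)"
      unfolding u_def by (intro Bochner_Integration.integral_cong) (auto simp: indicator_def)
    also have "\<dots> = (\<integral>t. indicator I t \<partial>lborel) - (\<integral>t. (\<Sum>i<n. a i * (indicator I t * translate f (lam i) t)) \<partial>lborel)"
      using Is fi' by (intro Bochner_Integration.integral_diff Bochner_Integration.integrable_sum Bochner_Integration.integrable_mult_right) auto
    also have "(\<integral>t. (\<Sum>i<n. a i * (indicator I t * translate f (lam i) t)) \<partial>lborel)
        = (\<Sum>i<n. a i * (\<integral>t. indicator I t * translate f (lam i) t \<partial>lborel))"
      using fi' by (subst Bochner_Integration.integral_sum) auto
    finally show ?thesis using Is mI by simp
  qed
  have small: "(\<lambda>n. \<integral>t. indicator I t * u n t \<partial>lborel) \<longlonglongrightarrow> 0"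
    unfolding lim_sequentially
  proof (intro allI impI)
    fix \<epsilon> :: real assume \<epsilon>: "0 < \<epsilon>"
    define e where "e = \<epsilon> / (2 * r)"
    have e0: "0 < e" unfolding e_def using \<epsilon> r by simp
    have "0 < \<epsilon> / 2 / e powr (1 - p)" using \<epsilon> e0 by simp
    then obtain no where no: "\<And>n. n \<ge> no \<Longrightarrow> dist (\<integral>t. \<bar>u n t\<bar> powr p \<partial>lborel) 0 < \<epsilon> / 2 / e powr (1 - p)"
      using D unfolding lim_sequentially by blast
    show "\<exists>no. \<forall>n\<ge>no. dist (\<integral>t. indicator I t * u n t \<partial>lborel) 0 < \<epsilon>"
    proof (intro exI allI impI)
      fix n assume "no \<le> n"
      then have Dn: "(\<integral>t. \<bar>u n t\<bar> powr p \<partial>lborel) < \<epsilon> / 2 / e powr (1 - p)" using no by simp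
      have "\<bar>\<integral>t. indicator I t * u n t \<partial>lborel\<bar> \<le> e * r + e powr (1 - p) * (\<integral>t. \<bar>u n t\<bar> powr p \<partial>lborel)"
        using int_ind_small[OF uL Is e0] mI by simp
      also have "e powr (1 - p) * (\<integral>t. \<bar>u n t\<bar> powr p \<partial>lborel) < \<epsilon> / 2"
        using Dn e0 by (simp add: field_simps)
      also have "e * r = \<epsilon> / 2" unfolding e_def using r by simp
      finally show "dist (\<integral>t. indicator I t * u n t \<partial>lborel) 0 < \<epsilon>" by simp
    qed
  qed
  have "(\<lambda>n. r - (\<integral>t. indicator I t * u n t \<partial>lborel)) \<longlonglongrightarrow> r - 0"
    by (intro tendsto_diff tendsto_const small)
  then have "(\<lambda>n. \<Sum>i<n. a i * (\<integral>t. indicator I t * translate f (lam i) t \<partial>lborel)) \<longlonglongrightarrow> r"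
    using eq by simp
  then show ?thesis unfolding I_def a_def .
qed

lemma F2: "0 < (\<integral>t. \<bar>f t\<bar> powr p \<partial>lborel)"
proof (rule ccontr)
  assume "\<not> 0 < (\<integral>t. \<bar>f t\<bar> powr p \<partial>lborel)"
  moreover have "0 \<le> (\<integral>t. \<bar>f t\<bar> powr p \<partial>lborel)" by (intro integral_nonneg_AE) auto
  ultimately have z: "(\<integral>t. \<bar>f t\<bar> powr p \<partial>lborel) = 0" by linarith
  have Is: "{0..<0+1::real} \<in> sets lborel" "emeasure lborel {0..<0+1::real} < \<infinity>" by auto
  have zero: "(\<integral>t. indicator {0..<0+1::real} t * translate f (lam i) t \<partial>lborel) = 0" for i
  proof -
    have "\<bar>\<integral>t. indicator {0..<0+1::real} t * translate f (lam i) t \<partial>lborel\<bar> \<le> e" if e: "0 < e" for e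
      using int_ind_small[OF xLp Is e, of i] z int_pow_translate[of f "lam i" p] by simp
    then have "\<bar>\<integral>t. indicator {0..<0+1::real} t * translate f (lam i) t \<partial>lborel\<bar> \<le> 0 + e" if e: "0 < e" for e
      using e by simp
    then have "\<bar>\<integral>t. indicator {0..<0+1::real} t * translate f (lam i) t \<partial>lborel\<bar> \<le> 0"
      by (rule field_le_epsilon)
    then show ?thesis by simp
  qed
  have "(\<lambda>n. \<Sum>i<n. (\<integral>s. indicator {0..<0+1::real} s * g i s \<partial>lborel) * (\<integral>t. indicator {0..<0+1::real} t * translate f (lam i) t \<partial>lborel)) \<longlonglongrightarrow> 1"
    by (rule F1) simp
  then have "(\<lambda>n. 0::real) \<longlonglongrightarrow> 1" using zero by simp
  then show False using LIMSEQ_unique[OF _ tendsto_const[of "0::real"]] by fastforce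
qed

lemma H1:
  assumes h: "in_Lp p h"
  shows "(\<lambda>i. \<integral>s. h s * g i s \<partial>lborel) \<longlonglongrightarrow> 0"
proof -
  define a where "a = (\<lambda>i. \<integral>s. h s * g i s \<partial>lborel)"
  define u where "u = (\<lambda>n t. h t - (\<Sum>i<n. a i * translate f (lam i) t))"
  define D where "D = (\<lambda>n. \<integral>t. \<bar>u n t\<bar> powr p \<partial>lborel)"
  define Fp where "Fp = (\<integral>t. \<bar>f t\<bar> powr p \<partial>lborel)"
  have Fp: "0 < Fp" unfolding Fp_def by (rule F2)
  have uL: "in_Lp p (u n)" for n unfolding u_def by (rule uLp[OF h])
  have D0: "D \<longlonglongrightarrow> 0" using F0[OF h] unfolding D_def u_def a_def .
  have bd: "\<bar>a n\<bar> powr p \<le> 2 powr p * (D n + D (Suc n)) / Fp" for n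
  proof -
    have pt: "a n * translate f (lam n) t = u n t + (- u (Suc n) t)" for t
      unfolding u_def by simp
    have xi: "integrable lborel (\<lambda>t. \<bar>translate f (lam n) t\<bar> powr p)"
      using xLp[of n] unfolding in_Lp_def by simp
    have ptw: "\<bar>a n * translate f (lam n) t\<bar> powr p = \<bar>a n\<bar> powr p * \<bar>translate f (lam n) t\<bar> powr p" for t
      by (simp only: abs_mult powr_mult abs_ge_zero)
    have "(\<integral>t. \<bar>a n * translate f (lam n) t\<bar> powr p \<partial>lborel) = \<bar>a n\<bar> powr p * (\<integral>t. \<bar>translate f (lam n) t\<bar> powr p \<partial>lborel)"
      unfolding ptw by (rule integral_mult_right_zero)
    also have "\<dots> = \<bar>a n\<bar> powr p * Fp" unfolding Fp_def by (simp only: int_pow_translate)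
    finally have eq1: "\<bar>a n\<bar> powr p * Fp = (\<integral>t. \<bar>a n * translate f (lam n) t\<bar> powr p \<partial>lborel)" by simp
    have i1: "integrable lborel (\<lambda>t. \<bar>a n * translate f (lam n) t\<bar> powr p)"
      unfolding ptw using xi by (rule integrable_mult_right)
    have i2: "integrable lborel (\<lambda>t. \<bar>u n t\<bar> powr p)" "integrable lborel (\<lambda>t. \<bar>u (Suc n) t\<bar> powr p)"
      using uL[of n] uL[of "Suc n"] unfolding in_Lp_def by auto
    have "(\<integral>t. \<bar>a n * translate f (lam n) t\<bar> powr p \<partial>lborel) \<le> (\<integral>t. 2 powr p * (\<bar>u n t\<bar> powr p + \<bar>u (Suc n) t\<bar> powr p) \<partial>lborel)"
    proof (rule integral_mono[OF i1])
      show "integrable lborel (\<lambda>t. 2 powr p * (\<bar>u n t\<bar> powr p + \<bar>u (Suc n) t\<bar> powr p))"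
        using i2 by (intro integrable_mult_right Bochner_Integration.integrable_add)
      show "\<bar>a n * translate f (lam n) t\<bar> powr p \<le> 2 powr p * (\<bar>u n t\<bar> powr p + \<bar>u (Suc n) t\<bar> powr p)" for t
        unfolding pt using powr_abs_add_le[OF p0, of "u n t" "- u (Suc n) t"] by (simp only: abs_minus_cancel)
    qed
    also have "\<dots> = 2 powr p * (D n + D (Suc n))"
      unfolding D_def using i2 by (simp only: integral_mult_right_zero Bochner_Integration.integral_add)
    finally show ?thesis using Fp eq1 by (simp add: pos_le_divide_eq)
  qed
  have DS: "(\<lambda>n. D (Suc n)) \<longlonglongrightarrow> 0" using D0 by (rule LIMSEQ_Suc)
  have B: "(\<lambda>n. 2 powr p * (D n + D (Suc n)) / Fp) \<longlonglongrightarrow> 0"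
    using tendsto_divide_zero[OF tendsto_mult_right_zero[OF tendsto_add_zero[OF D0 DS]], of "2 powr p" Fp] .
  have "(\<lambda>n. \<bar>a n\<bar> powr p) \<longlonglongrightarrow> 0"
  proof (rule tendsto_sandwich[OF _ _ tendsto_const B])
    show "\<forall>\<^sub>F n in sequentially. 0 \<le> \<bar>a n\<bar> powr p" by simp
    show "\<forall>\<^sub>F n in sequentially. \<bar>a n\<bar> powr p \<le> 2 powr p * (D n + D (Suc n)) / Fp"
      using bd by simp
  qed
  then have "(\<lambda>n. (\<bar>a n\<bar> powr p) powr (1/p)) \<longlonglongrightarrow> 0"
    by (rule tendsto_zero_powrI[OF _ tendsto_const]) (auto simp: p0)
  then have "(\<lambda>n. \<bar>a n\<bar>) \<longlonglongrightarrow> 0" using p0 by (simp add: powr_powr)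
  then show ?thesis unfolding a_def by (simp add: tendsto_rabs_zero_iff)
qed

end


lemma partition_integral:
  fixes G :: "real \<Rightarrow> real" and m :: nat
  assumes m: "0 < m" and GI: "\<And>S. S \<in> sets lborel \<Longrightarrow> emeasure lborel S < \<infinity> \<Longrightarrow> integrable lborel (\<lambda>t. G t * indicator S t)"
  shows "(\<Sum>k<m. \<integral>t. G t * indicator {c + real k / m..<c + real (Suc k) / m} t \<partial>lborel)
       = (\<integral>t. G t * indicator {c..<c+1} t \<partial>lborel)"
proof -
  have le: "c + real k / m \<le> c + real (Suc k) / m" for k using m by (simp add: divide_right_mono)
  have "(\<Sum>k<m. \<integral>t. G t * indicator {c + real k / m..<c + real (Suc k) / m} t \<partial>lborel)
      = (\<integral>t. (\<Sum>k<m. G t * indicator {c + real k / m..<c + real (Suc k) / m} t) \<partial>lborel)"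
    using le by (subst Bochner_Integration.integral_sum) (auto intro!: GI)
  also have "\<dots> = (\<integral>t. G t * indicator {c..<c+1} t \<partial>lborel)"
    by (intro Bochner_Integration.integral_cong refl)
       (simp only: sum_distrib_left[symmetric] partition_indicator[OF m])
  finally show ?thesis .
qed

context fctx
begin

lemma q0: "0 < q" using q by simp

lemma gI: "S \<in> sets lborel \<Longrightarrow> emeasure lborel S < \<infinity> \<Longrightarrow> integrable lborel (\<lambda>t. \<bar>g i t\<bar> * indicator S t)"
  using ind_bound_lemma(1)[of q 1 "g i" S] gLq[of i] q unfolding in_Lp_def by auto

lemma xI: "S \<in> sets lborel \<Longrightarrow> emeasure lborel S < \<infinity> \<Longrightarrow> integrable lborel (\<lambda>t. \<bar>f (t - lam i)\<bar> * indicator S t)"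
  using ind_bound_lemma(1)[of p 1 "translate f (lam i)" S] xLp[of i] p unfolding in_Lp_def translate_def by auto

lemma a_bound: "S \<in> sets lborel \<Longrightarrow> emeasure lborel S < \<infinity> \<Longrightarrow>
   \<bar>\<integral>s. indicator S s * g i s \<partial>lborel\<bar> \<le> (\<integral>t. \<bar>g i t\<bar> * indicator S t \<partial>lborel)"
  using ind_bound_lemma(6)[of q 1 "g i" S] gLq[of i] q unfolding in_Lp_def by auto

lemma b_bound: "S \<in> sets lborel \<Longrightarrow> emeasure lborel S < \<infinity> \<Longrightarrow>
   \<bar>\<integral>s. indicator S s * translate f (lam i) s \<partial>lborel\<bar> \<le> (\<integral>t. \<bar>f (t - lam i)\<bar> * indicator S t \<partial>lborel)"
  using ind_bound_lemma(6)[of p 1 "translate f (lam i)" S] xLp[of i] p unfolding in_Lp_def translate_def by auto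

lemma xf_bound: "S \<in> sets lborel \<Longrightarrow> emeasure lborel S < \<infinity> \<Longrightarrow>
   (\<integral>t. \<bar>f (t - lam i)\<bar> * indicator S t \<partial>lborel) \<le> (\<integral>t. \<bar>f t\<bar> \<partial>lborel)"
proof -
  assume S: "S \<in> sets lborel" "emeasure lborel S < \<infinity>"
  have "(\<integral>t. \<bar>f (t - lam i)\<bar> * indicator S t \<partial>lborel) \<le> (\<integral>t. \<bar>f (t - lam i)\<bar> \<partial>lborel)"
    using xI[OF S, of i] fi integrable_shift_iff[of "\<lambda>t. \<bar>f t\<bar>" "lam i"]
    by (intro integral_mono) (auto simp: indicator_def)
  also have "\<dots> = (\<integral>t. \<bar>f t\<bar> \<partial>lborel)" using integral_shift[of "\<lambda>t. \<bar>f t\<bar>" "lam i"] by simp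
  finally show ?thesis .
qed

lemma tail_ev:
  assumes eps: "0 < \<epsilon>"
  shows "eventually (\<lambda>n::nat. \<forall>W. W \<in> sets lborel \<longrightarrow> W \<subseteq> {real n..} \<longrightarrow> emeasure lborel W \<le> 2
           \<longrightarrow> (\<integral>t. \<bar>g i t\<bar> * indicator W t \<partial>lborel) \<le> \<epsilon>) sequentially"
proof -
  have gm[measurable]: "g i \<in> borel_measurable lborel" and gq: "integrable lborel (\<lambda>t. \<bar>g i t\<bar> powr q)"
    using gLq[of i] unfolding in_Lp_def by auto
  define T where "T = (\<lambda>n::nat. \<integral>t. \<bar>g i t\<bar> powr q * indicator {real n..} t \<partial>lborel)"
  have T0': "T \<longlonglongrightarrow> (\<integral>t. (0::real) \<partial>(lborel::real measure))"
    unfolding T_def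
  proof (rule integral_dominated_convergence[where w="\<lambda>t. \<bar>g i t\<bar> powr q" and M=lborel and f="\<lambda>t. 0" and s="\<lambda>n t. \<bar>g i t\<bar> powr q * indicator {real n..} t"])
    show "(\<lambda>t. 0::real) \<in> borel_measurable lborel" by simp
    show "(\<lambda>t. \<bar>g i t\<bar> powr q * indicator {real n..} t) \<in> borel_measurable lborel" for n by measurable
    show "integrable lborel (\<lambda>t. \<bar>g i t\<bar> powr q)" by (rule gq)
    show "AE t in lborel. (\<lambda>n. \<bar>g i t\<bar> powr q * indicator {real n..} t) \<longlonglongrightarrow> 0"
    proof (intro AE_I2)
      fix t :: real
      obtain n0 :: nat where "t < real n0" using reals_Archimedean2 by blast
      then have "eventually (\<lambda>n. \<bar>g i t\<bar> powr q * indicator {real n..} t = 0) sequentially"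
        unfolding eventually_sequentially
        by (intro exI[of _ n0] allI impI) (auto simp: indicator_def)
      then show "(\<lambda>n. \<bar>g i t\<bar> powr q * indicator {real n..} t) \<longlonglongrightarrow> 0"
        by (rule tendsto_eventually)
    qed
    show "AE t in lborel. norm (\<bar>g i t\<bar> powr q * indicator {real n..} t) \<le> \<bar>g i t\<bar> powr q" for n
      by (intro AE_I2) (auto simp: indicator_def)
  qed
  have T0: "T \<longlonglongrightarrow> 0" using T0' by simp
  define e where "e = \<epsilon> / 4"
  have e0: "0 < e" unfolding e_def using eps by simp
  have "0 < \<epsilon> / 2 / e powr (1 - q)" using eps e0 by simp
  then obtain n0 where n0: "\<And>n. n \<ge> n0 \<Longrightarrow> dist (T n) 0 < \<epsilon> / 2 / e powr (1 - q)"
    using T0 unfolding lim_sequentially by auto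
  show ?thesis unfolding eventually_sequentially
  proof (intro exI[of _ n0] allI impI)
    fix n W assume n: "n0 \<le> n" and W: "W \<in> sets lborel" "W \<subseteq> {real n..}" "emeasure lborel W \<le> 2"
    have Wf: "emeasure lborel W < \<infinity>" using W(3) by (simp add: le_less_trans)
    have mW: "measure lborel W \<le> 2" using W(3) Wf by (simp add: measure_def enn2real_leI)
    have TW: "(\<integral>t. \<bar>g i t\<bar> powr q * indicator W t \<partial>lborel) \<le> T n"
      unfolding T_def using W gq
      by (intro integral_mono integrable_real_mult_indicator) (auto simp: indicator_def)
    have Tn: "T n < \<epsilon> / 2 / e powr (1 - q)" using n0[OF n] by simp
    have "(\<integral>t. \<bar>g i t\<bar> * indicator W t \<partial>lborel)
        \<le> e * measure lborel W + e powr (1 - q) * (\<integral>t. \<bar>g i t\<bar> powr q * indicator W t \<partial>lborel)"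
      using ind_bound_lemma(4)[OF _ e0 gm gq W(1) Wf] q by simp
    also have "\<dots> \<le> e * 2 + e powr (1 - q) * T n"
      using mW TW e0 by (intro add_mono mult_left_mono) auto
    also have "e powr (1 - q) * T n < \<epsilon> / 2" using Tn e0 by (simp add: field_simps)
    finally show "(\<integral>t. \<bar>g i t\<bar> * indicator W t \<partial>lborel) \<le> \<epsilon>" unfolding e_def by simp
  qed
qed


lemma SL:
  fixes N :: nat and R0 :: real and m :: nat
  assumes d: "0 < \<delta>" and sep: "\<forall>i j. i \<noteq> j \<longrightarrow> \<delta> \<le> \<bar>lam i - lam j\<bar>" and m: "0 < m"
  defines "A \<equiv> ((\<integral>t. \<bar>f t\<bar> \<partial>lborel) + 1) * (1 / \<delta> + 1)"
  shows "\<exists>R\<ge>R0. \<exists>k<m. \<exists>i\<ge>N. 1 / (4 * A) \<le>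
            \<bar>\<integral>s. indicator {R + real k / m..<R + real (Suc k) / m} s * g i s \<partial>lborel\<bar>"
proof -
  define F where "F = (\<integral>t. \<bar>f t\<bar> \<partial>lborel)"
  have F0: "0 \<le> F" unfolding F_def by (intro integral_nonneg_AE) auto
  have d1: "0 < 1 / \<delta> + 1" using d by (simp add: add_pos_pos)
  have A0: "0 < A" unfolding A_def F_def[symmetric] using F0 d1 by (intro mult_pos_pos) auto
  define \<beta> where "\<beta> = 1 / (4 * (F + 1))"
  have b0: "0 < \<beta>" unfolding \<beta>_def using F0 by simp
  have ev1: "eventually (\<lambda>n::nat. \<forall>i<N. \<forall>W. W \<in> sets lborel \<longrightarrow> W \<subseteq> {real n..} \<longrightarrow> emeasure lborel W \<le> 2
           \<longrightarrow> (\<integral>t. \<bar>g i t\<bar> * indicator W t \<partial>lborel) \<le> \<beta> / (N + 1)) sequentially"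
  proof -
    have "eventually (\<lambda>n::nat. \<forall>i\<in>{..<N}. \<forall>W. W \<in> sets lborel \<longrightarrow> W \<subseteq> {real n..} \<longrightarrow> emeasure lborel W \<le> 2
           \<longrightarrow> (\<integral>t. \<bar>g i t\<bar> * indicator W t \<partial>lborel) \<le> \<beta> / (N + 1)) sequentially"
      using b0 by (intro eventually_ball_finite ballI tail_ev) auto
    then show ?thesis by (rule eventually_mono) auto
  qed
  have ev2: "eventually (\<lambda>n::nat. R0 \<le> real n) sequentially"
  proof -
    obtain n' :: nat where "R0 \<le> real n'" using real_arch_simple by blast
    then show ?thesis unfolding eventually_sequentially
      by (intro exI[of _ n'] allI impI) (meson of_nat_le_iff order_trans)
  qed
  obtain n0 where n0: "\<forall>i<N. \<forall>W. W \<in> sets lborel \<longrightarrow> W \<subseteq> {real n0..} \<longrightarrow> emeasure lborel W \<le> 2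
           \<longrightarrow> (\<integral>t. \<bar>g i t\<bar> * indicator W t \<partial>lborel) \<le> \<beta> / (N + 1)" "R0 \<le> real n0"
    using eventually_conj[OF ev1 ev2] eventually_sequentially by auto
  define R where "R = real n0"
  define J where "J = {R..<R+1}"
  have Js: "J \<in> sets lborel" "emeasure lborel J < \<infinity>" "emeasure lborel J \<le> 2" "J \<subseteq> {real n0..}"
    unfolding J_def R_def by auto
  have gJ: "(\<Sum>i<N. \<integral>t. \<bar>g i t\<bar> * indicator J t \<partial>lborel) \<le> \<beta>"
  proof -
    have "(\<Sum>i<N. \<integral>t. \<bar>g i t\<bar> * indicator J t \<partial>lborel) \<le> (\<Sum>i<N. \<beta> / (N + 1))"
      using n0(1) Js by (intro sum_mono) auto
    also have "\<dots> = N * \<beta> / (N + 1)" by simp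
    also have "\<dots> \<le> \<beta>" using b0 by (simp add: field_simps)
    finally show ?thesis .
  qed
  define e where "e = (\<lambda>k::nat. {R + real k / m..<R + real (Suc k) / m})"
  have es: "e k \<in> sets lborel" "emeasure lborel (e k) < \<infinity>" for k
    unfolding e_def using m by (auto simp: divide_right_mono)
  show ?thesis
  proof (rule ccontr)
    assume "\<not> ?thesis"
    then have small: "\<bar>\<integral>s. indicator (e k) s * g i s \<partial>lborel\<bar> < 1 / (4 * A)" if "k < m" "N \<le> i" for k i
      using that n0(2) unfolding e_def R_def by force
    define a where "a = (\<lambda>i k. \<integral>s. indicator (e k) s * g i s \<partial>lborel)"
    define b where "b = (\<lambda>i k. \<integral>s. indicator (e k) s * translate f (lam i) s \<partial>lborel)"
    have ek: "e k = {R + real k / m..<R + real k / m + 1 / m}" for k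
      unfolding e_def by (simp add: add_divide_distrib add_ac)
    have lim: "(\<lambda>n. \<Sum>k<m. \<Sum>i<n. a i k * b i k) \<longlonglongrightarrow> (\<Sum>k<m. 1 / real m)"
      unfolding a_def b_def ek using m by (intro tendsto_sum F1) auto
    then have lim1: "(\<lambda>n. \<Sum>k<m. \<Sum>i<n. a i k * b i k) \<longlonglongrightarrow> 1" using m by simp
    have "eventually (\<lambda>n. 3/4 < (\<Sum>k<m. \<Sum>i<n. a i k * b i k)) sequentially"
      using lim1 by (rule order_tendstoD) simp
    then obtain n1 where n1: "\<And>n. n \<ge> n1 \<Longrightarrow> 3/4 < (\<Sum>k<m. \<Sum>i<n. a i k * b i k)"
      unfolding eventually_sequentially by auto
    define n where "n = max n1 N"
    have big: "3/4 < (\<Sum>k<m. \<Sum>i<n. a i k * b i k)" using n1 n_def by simp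
    define G where "G = (\<lambda>i k. \<integral>t. \<bar>g i t\<bar> * indicator (e k) t \<partial>lborel)"
    define X where "X = (\<lambda>i k. \<integral>t. \<bar>f (t - lam i)\<bar> * indicator (e k) t \<partial>lborel)"
    have X0: "0 \<le> X i k" for i k unfolding X_def by (intro integral_nonneg_AE) auto
    have G0: "0 \<le> G i k" for i k unfolding G_def by (intro integral_nonneg_AE) auto
    have trm: "a i k * b i k \<le> (if i < N then F * G i k else 0) + 1 / (4 * A) * X i k" if "k < m" for i k
    proof -
      have ab: "\<bar>a i k\<bar> \<le> G i k" unfolding a_def G_def by (rule a_bound[OF es])
      have bb: "\<bar>b i k\<bar> \<le> X i k" unfolding b_def X_def by (rule b_bound[OF es])
      have XF: "X i k \<le> F" unfolding X_def F_def by (rule xf_bound[OF es])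
      have "a i k * b i k \<le> \<bar>a i k\<bar> * \<bar>b i k\<bar>" by (simp add: abs_mult[symmetric])
      show ?thesis
      proof (cases "i < N")
        case True
        have "\<bar>a i k\<bar> * \<bar>b i k\<bar> \<le> G i k * F" using ab bb XF by (intro mult_mono) auto
        then show ?thesis using True \<open>a i k * b i k \<le> \<bar>a i k\<bar> * \<bar>b i k\<bar>\<close> X0[of i k] A0
          by (simp add: mult.commute) (smt (verit) divide_nonneg_nonneg mult_nonneg_nonneg)
      next
        case False
        have "\<bar>a i k\<bar> < 1 / (4 * A)" using small[OF that, of i] False unfolding a_def by simp
        then have "\<bar>a i k\<bar> \<le> 1 / (4 * A)" by simp
        then have "\<bar>a i k\<bar> * \<bar>b i k\<bar> \<le> 1 / (4 * A) * X i k" using bb A0 by (intro mult_mono) auto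
        then show ?thesis using False \<open>a i k * b i k \<le> \<bar>a i k\<bar> * \<bar>b i k\<bar>\<close> by simp
      qed
    qed
    have "(\<Sum>k<m. \<Sum>i<n. a i k * b i k) \<le> (\<Sum>k<m. \<Sum>i<n. (if i < N then F * G i k else 0) + 1 / (4 * A) * X i k)"
      using trm by (intro sum_mono) auto
    also have "\<dots> = (\<Sum>i<n. (if i < N then F * (\<Sum>k<m. G i k) else 0)) + 1 / (4 * A) * (\<Sum>i<n. \<Sum>k<m. X i k)"
    proof -
      have "(\<Sum>k<m. \<Sum>i<n. (if i < N then F * G i k else 0) + 1 / (4 * A) * X i k)
          = (\<Sum>k<m. \<Sum>i<n. (if i < N then F * G i k else 0)) + 1 / (4 * A) * (\<Sum>k<m. \<Sum>i<n. X i k)"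
        by (simp add: sum.distrib sum_distrib_left)
      also have "(\<Sum>k<m. \<Sum>i<n. (if i < N then F * G i k else 0)) = (\<Sum>i<n. \<Sum>k<m. (if i < N then F * G i k else 0))"
        by (rule sum.swap)
      also have "\<dots> = (\<Sum>i<n. (if i < N then F * (\<Sum>k<m. G i k) else 0))"
        by (intro sum.cong refl) (auto simp: sum_distrib_left)
      also have "(\<Sum>k<m. \<Sum>i<n. X i k) = (\<Sum>i<n. \<Sum>k<m. X i k)" by (rule sum.swap)
      finally show ?thesis .
    qed
    also have "(\<Sum>i<n. (if i < N then F * (\<Sum>k<m. G i k) else 0)) = (\<Sum>i<N. F * (\<Sum>k<m. G i k))"
      by (rule sum.mono_neutral_cong_right) (auto simp: n_def)
    finally have ch: "(\<Sum>k<m. \<Sum>i<n. a i k * b i k) \<le> (\<Sum>i<N. F * (\<Sum>k<m. G i k)) + 1 / (4 * A) * (\<Sum>i<n. \<Sum>k<m. X i k)" .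
    have GS: "(\<Sum>k<m. G i k) = (\<integral>t. \<bar>g i t\<bar> * indicator J t \<partial>lborel)" for i
      unfolding G_def e_def J_def using partition_integral[OF m gI, of i R] by simp
    have XS: "(\<Sum>k<m. X i k) = (\<integral>t. \<bar>f (t - lam i)\<bar> * indicator J t \<partial>lborel)" for i
      unfolding X_def e_def J_def using partition_integral[OF m xI, of i R] by simp
    have B1: "(\<Sum>i<N. F * (\<Sum>k<m. G i k)) \<le> F * \<beta>"
      unfolding GS using gJ F0 by (simp add: sum_distrib_left[symmetric] mult_left_mono)
    have B2: "(\<Sum>i<n. \<Sum>k<m. X i k) \<le> F * (1 / \<delta> + 1)"
      unfolding XS J_def F_def using disc_sum_bound[OF fi inj d sep, where r=1 and n=n and c=R] by simp
    have "1 / (4 * A) * (\<Sum>i<n. \<Sum>k<m. X i k) \<le> 1 / (4 * A) * (F * (1 / \<delta> + 1))"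
      using B2 A0 by (intro mult_left_mono) auto
    then have "3/4 < F * \<beta> + 1 / (4 * A) * (F * (1 / \<delta> + 1))" using big ch B1 by linarith
    moreover have "F * \<beta> < 1/4" unfolding \<beta>_def using F0 by (simp add: field_simps)
    moreover have "1 / (4 * A) * (F * (1 / \<delta> + 1)) \<le> 1/4"
    proof -
      have "F * (1 / \<delta> + 1) \<le> A" unfolding A_def F_def[symmetric] using d1 by (intro mult_right_mono) auto
      then have "F * (1 / \<delta> + 1) / (4 * A) \<le> A / (4 * A)" using A0 by (intro divide_right_mono) auto
      also have "A / (4 * A) = 1/4" using A0 by simp
      finally show ?thesis by simp
    qed
    ultimately show False by linarith
  qed
qed

end



context fctx
begin

lemma aI: "S \<in> sets lborel \<Longrightarrow> emeasure lborel S < \<infinity> \<Longrightarrow> integrable lborel (\<lambda>s. indicator S s * g i s)"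
  using ind_bound_lemma(3)[of q 1 "g i" S] gLq[of i] q unfolding in_Lp_def by auto

lemma H1_ev:
  assumes h: "in_Lp p h" and e: "0 < \<epsilon>"
  shows "\<exists>N. \<forall>i\<ge>N. \<bar>\<integral>s. h s * g i s \<partial>lborel\<bar> < \<epsilon>"
  using H1[OF h] e unfolding lim_sequentially by (auto simp: dist_real_def)

lemma disj_lemma: "A \<subseteq> {..<r} \<Longrightarrow> B \<subseteq> {r..} \<Longrightarrow> A \<inter> B = {}" for r :: real
  by (auto simp: subset_eq) (meson linorder_not_le)

lemma part2: False
proof -
  obtain \<delta> where d: "0 < \<delta>" and sep: "\<forall>i j. i \<noteq> j \<longrightarrow> \<delta> \<le> \<bar>lam i - lam j\<bar>"
    using ud unfolding uniformly_discrete_seq_def by blast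
  define A where "A = ((\<integral>t. \<bar>f t\<bar> \<partial>lborel) + 1) * (1 / \<delta> + 1)"
  have F0: "0 \<le> (\<integral>t. \<bar>f t\<bar> \<partial>lborel)" by (intro integral_nonneg_AE) auto
  have d1: "0 < 1 / \<delta> + 1" using d by (simp add: add_pos_pos)
  have F1: "0 < (\<integral>t. \<bar>f t\<bar> \<partial>lborel) + 1" using F0 by linarith
  have A0: "0 < A" unfolding A_def using F1 d1 by (rule mult_pos_pos)
  define a where "a = (\<lambda>i h. \<integral>s. h s * g i s \<partial>lborel)"
  define P where "P = (\<lambda>n::nat. \<lambda>x::real \<times> real set. (n = 0 \<longrightarrow> x = (0, {})) \<and> snd x \<in> sets lborel \<and> snd x \<subseteq> {0..<fst x} \<and> 0 \<le> fst x)"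
  define C where "C = (\<lambda>(n::nat) (x::real \<times> real set) (y::real \<times> real set) (I::real set) (i::nat).
      I \<in> sets lborel \<and> I \<subseteq> {fst x..<fst y} \<and> emeasure lborel I = ennreal ((1/2)^n)
      \<and> n \<le> i \<and> 1 / (4 * A) \<le> \<bar>a i (indicator I)\<bar> \<and> \<bar>a i (indicator (snd x))\<bar> \<le> 1 / (16 * A)
      \<and> (\<forall>W. W \<in> sets lborel \<longrightarrow> W \<subseteq> {fst y..} \<longrightarrow> emeasure lborel W \<le> 2 \<longrightarrow> (\<integral>t. \<bar>g i t\<bar> * indicator W t \<partial>lborel) \<le> 1 / (16 * A))
      \<and> snd y = snd x \<union> I \<and> fst x + 1 \<le> fst y)"
  define Q where "Q = (\<lambda>n x y. \<exists>I i. C n x y I i)"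
  have P0: "\<exists>x. P 0 x" unfolding P_def by (intro exI[of _ "(0, {})"]) auto
  have Pstep: "\<exists>y. P (Suc n) y \<and> Q n x y" if Px: "P n x" for n x
  proof -
    obtain R V where x: "x = (R, V)" by (cases x)
    have V: "V \<in> sets lborel" "V \<subseteq> {0..<R}" "0 \<le> R" using Px x unfolding P_def by auto
    have Vf: "emeasure lborel V < \<infinity>"
    proof -
      have "emeasure lborel V \<le> emeasure lborel {0..<R}" using V by (intro emeasure_mono) auto
      then show ?thesis using V by (simp add: le_less_trans)
    qed
    have VLp: "in_Lp p (indicator V :: real \<Rightarrow> real)" by (rule in_Lp_indicator(1)[OF p0 V(1) Vf])
    obtain N where N: "\<And>i. i \<ge> N \<Longrightarrow> \<bar>a i (indicator V)\<bar> < 1 / (16 * A)"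
      using H1_ev[OF VLp, of "1 / (16 * A)"] A0 unfolding a_def by auto
    obtain R' k i where R': "R \<le> R'" and k: "k < (2::nat)^n" and i: "max N n \<le> i"
      and big: "1 / (4 * A) \<le> \<bar>\<integral>s. indicator {R' + real k / real (2^n)..<R' + real (Suc k) / real (2^n)} s * g i s \<partial>lborel\<bar>"
      using SL[OF d sep, where m="2^n" and N="max N n" and ?R0.0=R] unfolding A_def by auto
    define I where "I = {R' + real k / real (2^n)..<R' + real (Suc k) / real (2^n)}"
    have Isub: "I \<subseteq> {R'..<R'+1}"
    proof -
      have "real (Suc k) \<le> real (2^n)" using k by linarith
      then have "real (Suc k) / real (2^n) \<le> 1" by simp
      then show ?thesis unfolding I_def by auto
    qed
    have Imeas: "emeasure lborel I = ennreal ((1/2)^n)"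
    proof -
      have le: "R' + real k / real (2^n) \<le> R' + real (Suc k) / real (2^n)" by (simp add: divide_right_mono)
      have "R' + real (Suc k) / real (2^n) - (R' + real k / real (2^n)) = 1 / 2^n"
        by (simp add: diff_divide_distrib[symmetric])
      then show ?thesis unfolding I_def using le by (simp add: power_one_over)
    qed
    have tev: "eventually (\<lambda>n'::nat. \<forall>W. W \<in> sets lborel \<longrightarrow> W \<subseteq> {real n'..} \<longrightarrow> emeasure lborel W \<le> 2
           \<longrightarrow> (\<integral>t. \<bar>g i t\<bar> * indicator W t \<partial>lborel) \<le> 1 / (16 * A)) sequentially"
      using A0 by (intro tail_ev) auto
    have ev2: "eventually (\<lambda>n'::nat. R' + 1 \<le> real n') sequentially"
    proof -
      obtain n'' :: nat where "R' + 1 \<le> real n''" using real_arch_simple by blast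
      then show ?thesis unfolding eventually_sequentially
        by (intro exI[of _ n''] allI impI) (meson of_nat_le_iff order_trans)
    qed
    obtain n' where n': "\<forall>W. W \<in> sets lborel \<longrightarrow> W \<subseteq> {real n'..} \<longrightarrow> emeasure lborel W \<le> 2
           \<longrightarrow> (\<integral>t. \<bar>g i t\<bar> * indicator W t \<partial>lborel) \<le> 1 / (16 * A)" "R' + 1 \<le> real n'"
      using eventually_conj[OF tev ev2] eventually_sequentially by auto
    define y where "y = (real n', V \<union> I)"
    have Is: "I \<in> sets lborel" unfolding I_def by simp
    have sub: "V \<union> I \<subseteq> {0..<real n'}"
    proof
      fix t assume "t \<in> V \<union> I"
      then consider "t \<in> V" | "t \<in> I" by blast
      then show "t \<in> {0..<real n'}"
      proof cases
        case 1 then have "0 \<le> t" "t < R" using V(2) by auto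
        then show ?thesis using R' n'(2) by simp
      next
        case 2 then have "R' \<le> t" "t < R' + 1" using Isub by auto
        then show ?thesis using R' n'(2) V(3) by simp
      qed
    qed
    have "P (Suc n) y" unfolding P_def y_def using V(1) Is sub by simp
    moreover have "C n x y I i"
      unfolding C_def x y_def
    proof (intro conjI)
      show "I \<in> sets lborel" unfolding I_def by simp
      show "I \<subseteq> {fst (R, V)..<fst (real n', V \<union> I)}" using Isub R' n'(2) by auto
      show "emeasure lborel I = ennreal ((1/2)^n)" by (rule Imeas)
      show "n \<le> i" using i by simp
      show "1 / (4 * A) \<le> \<bar>a i (indicator I)\<bar>" using big unfolding a_def I_def .
      show "\<bar>a i (indicator (snd (R, V)))\<bar> \<le> 1 / (16 * A)" using N[of i] i by simp
      show "\<forall>W. W \<in> sets lborel \<longrightarrow> W \<subseteq> {fst (real n', V \<union> I)..} \<longrightarrow> emeasure lborel W \<le> 2 \<longrightarrow> (\<integral>t. \<bar>g i t\<bar> * indicator W t \<partial>lborel) \<le> 1 / (16 * A)"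
        using n'(1) by (simp only: fst_conv)
      show "snd (real n', V \<union> I) = snd (R, V) \<union> I" by simp
      show "fst (R, V) + 1 \<le> fst (real n', V \<union> I)" using R' n'(2) by simp
    qed
    ultimately show ?thesis unfolding Q_def by blast
  qed
  obtain Fs where Fs: "\<And>n. P n (Fs n) \<and> Q n (Fs n) (Fs (Suc n))"
    using dependent_nat_choice[of P Q, OF P0 Pstep] by blast
  have "\<forall>n. \<exists>z. C n (Fs n) (Fs (Suc n)) (fst z) (snd z)"
    using Fs unfolding Q_def by auto
  then obtain Z where Z: "\<And>n. C n (Fs n) (Fs (Suc n)) (fst (Z n)) (snd (Z n))"
    by metis
  define II where "II = (\<lambda>n. fst (Z n))"
  define ii where "ii = (\<lambda>n. snd (Z n))"
  define Rf where "Rf = (\<lambda>n. fst (Fs n))"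
  define V where "V = (\<lambda>n. snd (Fs n))"
  have C': "II n \<in> sets lborel" "II n \<subseteq> {Rf n..<Rf (Suc n)}" "emeasure lborel (II n) = ennreal ((1/2)^n)"
    "n \<le> ii n" "1 / (4 * A) \<le> \<bar>a (ii n) (indicator (II n))\<bar>" "\<bar>a (ii n) (indicator (V n))\<bar> \<le> 1 / (16 * A)"
    "\<And>W. W \<in> sets lborel \<Longrightarrow> W \<subseteq> {Rf (Suc n)..} \<Longrightarrow> emeasure lborel W \<le> 2 \<Longrightarrow> (\<integral>t. \<bar>g (ii n) t\<bar> * indicator W t \<partial>lborel) \<le> 1 / (16 * A)"
    "V (Suc n) = V n \<union> II n" "Rf n + 1 \<le> Rf (Suc n)" for n
    using Z[of n] unfolding C_def II_def ii_def Rf_def V_def by auto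
  have PV: "V n \<in> sets lborel" "V n \<subseteq> {0..<Rf n}" for n
    using Fs[of n] unfolding P_def V_def Rf_def by auto
  have V0: "V 0 = {}" using Fs[of 0] unfolding P_def V_def by auto
  have Vn: "V n = (\<Union>l\<in>{..<n}. II l)" for n
  proof (induction n)
    case 0 then show ?case using V0 by simp
  next
    case (Suc n) then show ?case using C'(8)[of n] by (simp add: lessThan_Suc Un_commute)
  qed
  have Rmono: "Rf n \<le> Rf l" if "n \<le> l" for n l
  proof -
    have "Rf k \<le> Rf (Suc k)" for k using C'(9)[of k] by linarith
    then show ?thesis using lift_Suc_mono_le[of Rf, OF _ that] by blast
  qed
  define U where "U = (\<Union>n. II n)"
  define W where "W = (\<lambda>n. \<Union>l\<in>{Suc n..}. II l)"
  have rII: "range II \<subseteq> sets lborel" using C'(1) by auto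
  have Us: "U \<in> sets lborel" unfolding U_def using sets.countable_UN[OF rII] by simp
  have Ws: "W n \<in> sets lborel" for n unfolding W_def using rII by (intro sets.countable_UN) auto
  have Umeas: "emeasure lborel U \<le> 2"
  proof -
    have "emeasure lborel U \<le> (\<Sum>n. emeasure lborel (II n))"
      unfolding U_def using C'(1) by (intro emeasure_subadditive_countably) auto
    also have "\<dots> = (\<Sum>n. ennreal ((1/2)^n))" using C'(3) by simp
    also have "\<dots> = ennreal (\<Sum>n. (1/2::real)^n)"
      by (intro suminf_ennreal2) (auto intro: summable_geometric)
    also have "(\<Sum>n. (1/2::real)^n) = 2" using suminf_geometric[of "1/2::real"] by simp
    finally show ?thesis by simp
  qed
  have Uf: "emeasure lborel U < \<infinity>" using Umeas by (simp add: le_less_trans)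
  have Wmeas: "emeasure lborel (W n) \<le> 2" for n
  proof -
    have "W n \<subseteq> U" unfolding W_def U_def by auto
    then have "emeasure lborel (W n) \<le> emeasure lborel U" by (intro emeasure_mono Us)
    then show ?thesis using Umeas by simp
  qed
  have Wf: "emeasure lborel (W n) < \<infinity>" for n using Wmeas[of n] by (simp add: le_less_trans)
  have Vf: "emeasure lborel (V n) < \<infinity>" for n
  proof -
    have "V n \<subseteq> U" unfolding Vn U_def by auto
    then have "emeasure lborel (V n) \<le> emeasure lborel U" by (rule emeasure_mono[OF _ Us])
    then show ?thesis using Uf by (simp add: le_less_trans)
  qed
  have If: "emeasure lborel (II n) < \<infinity>" for n using C'(3) by simp
  have Wsub: "W n \<subseteq> {Rf (Suc n)..}" for n
  proof
    fix t assume "t \<in> W n"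
    then obtain l where l: "Suc n \<le> l" "t \<in> II l" unfolding W_def by auto
    then have "Rf l \<le> t" using C'(2)[of l] by auto
    then show "t \<in> {Rf (Suc n)..}" using Rmono[OF l(1)] by simp
  qed
  have indU: "(indicator U t :: real) = indicator (V n) t + indicator (II n) t + indicator (W n) t" for n :: nat and t :: real
  proof -
    have un: "U = V n \<union> II n \<union> W n"
    proof
      show "U \<subseteq> V n \<union> II n \<union> W n"
      proof
        fix t assume "t \<in> U"
        then obtain l where l: "t \<in> II l" unfolding U_def by auto
        consider "l < n" | "l = n" | "Suc n \<le> l" by linarith
        then show "t \<in> V n \<union> II n \<union> W n"
          by cases (use l in \<open>auto simp: Vn W_def\<close>)
      qed
      show "V n \<union> II n \<union> W n \<subseteq> U" unfolding Vn W_def U_def by auto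
    qed
    have d1: "V n \<inter> II n = {}"
    proof -
      have "V n \<subseteq> {..<Rf n}" using PV(2)[of n] by auto
      moreover have "II n \<subseteq> {Rf n..}" using C'(2)[of n] by auto
      ultimately show ?thesis by (rule disj_lemma)
    qed
    have d2: "V n \<inter> W n = {}"
    proof -
      have "V n \<subseteq> {..<Rf n}" using PV(2)[of n] by auto
      moreover have "W n \<subseteq> {Rf n..}" using Wsub[of n] C'(9)[of n] by auto
      ultimately show ?thesis by (rule disj_lemma)
    qed
    have d3: "II n \<inter> W n = {}"
    proof -
      have "II n \<subseteq> {..<Rf (Suc n)}" using C'(2)[of n] by auto
      then show ?thesis using Wsub[of n] by (rule disj_lemma)
    qed
    show ?thesis unfolding un using d1 d2 d3 by (auto simp: indicator_def)
  qed
  have ULp: "in_Lp p (indicator U :: real \<Rightarrow> real)" by (rule in_Lp_indicator(1)[OF p0 Us Uf])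
  obtain N0 where N0: "\<And>i. i \<ge> N0 \<Longrightarrow> \<bar>a i (indicator U)\<bar> < 1 / (8 * A)"
    using H1_ev[OF ULp, of "1 / (8 * A)"] A0 unfolding a_def by auto
  define n where "n = N0"
  define i where "i = ii n"
  have iN: "i \<ge> N0" unfolding i_def n_def using C'(4)[of N0] by simp
  have split: "a i (indicator U) = a i (indicator (V n)) + a i (indicator (II n)) + a i (indicator (W n))"
  proof -
    have "a i (indicator U) = (\<integral>s. indicator (V n) s * g i s + indicator (II n) s * g i s + indicator (W n) s * g i s \<partial>lborel)"
      unfolding a_def by (intro Bochner_Integration.integral_cong refl) (simp add: indU[of _ n] distrib_right)
    also have "\<dots> = a i (indicator (V n)) + a i (indicator (II n)) + a i (indicator (W n))"
      unfolding a_def using aI[OF PV(1) Vf] aI[OF C'(1) If] aI[OF Ws Wf]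
      by (simp add: Bochner_Integration.integral_add)
    finally show ?thesis .
  qed
  have aW: "\<bar>a i (indicator (W n))\<bar> \<le> 1 / (16 * A)"
  proof -
    have "\<bar>a i (indicator (W n))\<bar> \<le> (\<integral>t. \<bar>g i t\<bar> * indicator (W n) t \<partial>lborel)"
      unfolding a_def by (rule a_bound[OF Ws Wf])
    also have "\<dots> \<le> 1 / (16 * A)" unfolding i_def by (rule C'(7)[OF Ws Wsub Wmeas])
    finally show ?thesis .
  qed
  have aV: "\<bar>a i (indicator (V n))\<bar> \<le> 1 / (16 * A)" using C'(6)[of n] unfolding i_def .
  have aI': "1 / (4 * A) \<le> \<bar>a i (indicator (II n))\<bar>" using C'(5)[of n] unfolding i_def .
  have "1 / (8 * A) \<le> \<bar>a i (indicator U)\<bar>"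
  proof -
    have "1 / (4 * A) - 1 / (16 * A) - 1 / (16 * A) = 1 / (8 * A)" using A0 by (simp add: field_simps)
    then show ?thesis unfolding split using aW aV aI' by linarith
  qed
  then show False using N0[OF iN] by linarith
qed

end


theorem proposition2p2:
  fixes p q :: real and f :: "real \<Rightarrow> real" and lam :: "nat \<Rightarrow> real"
  assumes "1 < p" and "1 / p + 1 / q = 1"
    and "in_Lp p f" and "integrable lborel f"
    and "inj lam" and "uniformly_discrete_seq lam"
  shows "\<not> (fundamental_Lp p (\<lambda>i. translate f (lam i)) \<and>
            bounded_minimal_Lp p (\<lambda>i. translate f (lam i)))
         \<and> \<not> (\<exists>g. (\<forall>i. in_Lp q (g i)) \<and> Lp_frame p (\<lambda>i. translate f (lam i)) g)"
proof (intro conjI notI)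
  assume "fundamental_Lp p (\<lambda>i. translate f (lam i)) \<and> bounded_minimal_Lp p (\<lambda>i. translate f (lam i))"
  then show False using part1[OF assms(1,3,4,5,6)] by blast
next
  assume "\<exists>g. (\<forall>i. in_Lp q (g i)) \<and> Lp_frame p (\<lambda>i. translate f (lam i)) g"
  then obtain g where g: "\<And>i. in_Lp q (g i)" "Lp_frame p (\<lambda>i. translate f (lam i)) g" by blast
  have q1: "1 < q"
  proof -
    have ip: "0 < 1 / p" "1 / p < 1" using assms(1) by auto
    then have iq: "0 < 1 / q" "1 / q < 1" using assms(2) by linarith+
    then have "0 < q" by (simp add: zero_less_divide_1_iff)
    then show ?thesis using iq by (simp add: divide_less_eq)
  qed
  interpret fctx p q f lam g
    using assms q1 g by unfold_locales auto
  show False by (rule part2)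
qed

end
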